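(* Let $p=\tfrac12$, $\mu=\mu_{1/2}$, and $K_\infty=\sum_{n=0}^\infty2^{-n}E_n$ on $L^2(\mu)$ (norm convergent). For $1\le r<\infty$, $K_\infty$ belongs to the Schatten class $S_r$ if and only if $r>1$. In particular $K_\infty$ is Hilbert–Schmidt but not trace class.
   Context: Let $S_0(x)=x/3$, $S_2(x)=(x+2)/3$ on $[0,1]$ and let $C$ be the middle-third Cantor set. $\mu=\mu_{1/2}$ is the unique Borel probability measure on $[0,1]$ with $\mu=\frac12\mu\circ S_0^{-1}+\frac12\mu\circ S_2^{-1}$. For words $w\in\{0,2\}^n$, $S_w=S_{w_1}\circ\cdots\circ S_{w_n}$, $C_w=S_w(C)$. $E_n$ is the conditional expectation on $L^2(\mu)$ onto the $\sigma$-algebra generated by $\{C_w:|w|=n\}$. $S_r$ is the class of compact operators whose singular values are $r$-summable. *)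

theory Defs
  imports "HOL-Probability.Probability"
begin

definition S :: "nat \<Rightarrow> real \<Rightarrow> real" where
  "S a x = (x + real a) / 3"

definition S0 :: "real \<Rightarrow> real" where "S0 = S 0"
definition S2 :: "real \<Rightarrow> real" where "S2 = S 2"

definition words :: "nat \<Rightarrow> nat list set" where
  "words n = {w. length w = n \<and> set w \<subseteq> {0, 2}}"

definition Sw :: "nat list \<Rightarrow> real \<Rightarrow> real" where
  "Sw w = foldr (\<lambda>a f. S a \<circ> f) w id"

definition cantor :: "real set" where
  "cantor = (\<Inter>n. \<Union>w\<in>words n. Sw w ` {0..1})"

definition Cw :: "nat list \<Rightarrow> real set" where
  "Cw w = Sw w ` cantor"

text \<open>M is a Borel probability measure on [0,1] with M = 1/2 M o S0^-1 + 1/2 M o S2^-1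
  (such a measure is unique; this is mu_{1/2}).\<close>
definition is_cantor_measure :: "real measure \<Rightarrow> bool" where
  "is_cantor_measure M \<longleftrightarrow>
     prob_space M \<and> sets M = sets (restrict_space borel {0..1}) \<and>
     (\<forall>A\<in>sets M. emeasure M A =
        ennreal (1/2) * emeasure M (S0 -` A \<inter> space M)
      + ennreal (1/2) * emeasure M (S2 -` A \<inter> space M))"

definition L2 :: "real measure \<Rightarrow> (real \<Rightarrow> real) set" where
  "L2 M = {f. f \<in> borel_measurable M \<and> integrable M (\<lambda>x. (f x)\<^sup>2)}"

definition l2norm :: "real measure \<Rightarrow> (real \<Rightarrow> real) \<Rightarrow> real" where
  "l2norm M f = sqrt (\<integral>x. (f x)\<^sup>2 \<partial>M)"

definition Fn :: "real measure \<Rightarrow> nat \<Rightarrow> real measure" where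
  "Fn M n = sigma (space M) (Cw ` words n)"

definition En :: "real measure \<Rightarrow> nat \<Rightarrow> (real \<Rightarrow> real) \<Rightarrow> (real \<Rightarrow> real)" where
  "En M n f = real_cond_exp M (Fn M n) f"

definition Kinf :: "real measure \<Rightarrow> (real \<Rightarrow> real) \<Rightarrow> (real \<Rightarrow> real)" where
  "Kinf M f = (\<lambda>x. \<Sum>n. (1/2) ^ n * En M n f x)"

text \<open>Linear operator on L^2(M) (acting on representatives, compatible with a.e. equality).\<close>
definition lin_op :: "real measure \<Rightarrow> ((real \<Rightarrow> real) \<Rightarrow> (real \<Rightarrow> real)) \<Rightarrow> bool" where
  "lin_op M T \<longleftrightarrow>
     (\<forall>f\<in>L2 M. T f \<in> L2 M) \<and>
     (\<forall>f\<in>L2 M. \<forall>g\<in>L2 M. \<forall>a b. AE x in M. T (\<lambda>y. a * f y + b * g y) x = a * T f x + b * T g x) \<and>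
     (\<forall>f\<in>L2 M. \<forall>g\<in>L2 M. (AE x in M. f x = g x) \<longrightarrow> (AE x in M. T f x = T g x))"

definition opnorm :: "real measure \<Rightarrow> ((real \<Rightarrow> real) \<Rightarrow> (real \<Rightarrow> real)) \<Rightarrow> ereal" where
  "opnorm M T = (SUP f\<in>{f\<in>L2 M. l2norm M f \<le> 1}.
       (if T f \<in> L2 M then ereal (l2norm M (T f)) else \<infinity>))"

definition rank_le :: "real measure \<Rightarrow> nat \<Rightarrow> ((real \<Rightarrow> real) \<Rightarrow> (real \<Rightarrow> real)) \<Rightarrow> bool" where
  "rank_le M k F \<longleftrightarrow> lin_op M F \<and>
     (\<exists>g::nat \<Rightarrow> real \<Rightarrow> real. (\<forall>i<k. g i \<in> L2 M) \<and>
        (\<forall>f\<in>L2 M. \<exists>c::nat \<Rightarrow> real. AE x in M. F f x = (\<Sum>i<k. c i * g i x)))"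

text \<open>k-th singular value (0-indexed): s_k(T) = inf { ||T - F|| : rank F \<le> k }.\<close>
definition sing_val :: "real measure \<Rightarrow> ((real \<Rightarrow> real) \<Rightarrow> (real \<Rightarrow> real)) \<Rightarrow> nat \<Rightarrow> ereal" where
  "sing_val M T k = (INF F\<in>{F. rank_le M k F}. opnorm M (\<lambda>f x. T f x - F f x))"

definition compact_op :: "real measure \<Rightarrow> ((real \<Rightarrow> real) \<Rightarrow> (real \<Rightarrow> real)) \<Rightarrow> bool" where
  "compact_op M T \<longleftrightarrow>
     (\<forall>f::nat \<Rightarrow> real \<Rightarrow> real. (\<forall>k. f k \<in> L2 M \<and> l2norm M (f k) \<le> 1) \<longrightarrow>
        (\<exists>\<phi>::nat \<Rightarrow> nat. strict_mono \<phi> \<and>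
           (\<forall>e>0. \<exists>N. \<forall>m\<ge>N. \<forall>n\<ge>N. l2norm M (\<lambda>x. T (f (\<phi> m)) x - T (f (\<phi> n)) x) < e)))"

definition schatten :: "real measure \<Rightarrow> real \<Rightarrow> ((real \<Rightarrow> real) \<Rightarrow> (real \<Rightarrow> real)) \<Rightarrow> bool" where
  "schatten M r T \<longleftrightarrow> lin_op M T \<and> compact_op M T \<and>
     summable (\<lambda>k. real_of_ereal (sing_val M T k) powr r)"

end

theory Submission
  imports Defs "HOL-Library.Diagonal_Subsequence"
begin
lemma Sw_Nil[simp]: "Sw [] = id" by (simp add: Sw_def)
lemma Sw_Cons[simp]: "Sw (a # w) = S a \<circ> Sw w" by (simp add: Sw_def)

lemma Sw_affine: "Sw w x = x / 3 ^ length w + Sw w 0"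
proof (induction w arbitrary: x)
  case Nil then show ?case by simp
next
  case (Cons a w)
  have e: "Sw w x = x / 3 ^ length w + Sw w 0" by (rule Cons.IH)
  show ?case by (simp add: S_def e add_divide_distrib)
qed

lemma Sw_range:
  assumes "set w \<subseteq> {0,2}" "x \<in> {0..1}"
  shows "Sw w x \<in> {0..1}"
  using assms
proof (induction w arbitrary: x)
  case (Cons a w)
  then have "Sw w x \<in> {0..1}" "a = 0 \<or> a = 2" by auto
  then show ?case by (auto simp: S_def)
qed auto

lemma Sw_inj_words:
  assumes "length w = length w'" "set w \<subseteq> {0,2}" "set w' \<subseteq> {0,2}"
    "x \<in> {0..1}" "y \<in> {0..1}" "Sw w x = Sw w' y"
  shows "w = w'"
  using assms
proof (induction w arbitrary: w')
  case Nil then show ?case by simp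
next
  case (Cons a w)
  then obtain b v where w': "w' = b # v" by (cases w') auto
  have r1: "Sw w x \<in> {0..1}" using Cons Sw_range by auto
  have r2: "Sw v y \<in> {0..1}" using Cons Sw_range w' by auto
  have ab: "a = 0 \<or> a = 2" "b = 0 \<or> b = 2" using Cons w' by auto
  have eq: "Sw w x + a = Sw v y + b" using Cons(7) w' by (simp add: S_def)
  have "a = b" using r1 r2 ab eq by auto
  then have "Sw w x = Sw v y" using eq by simp
  then have "w = v" using Cons w' by auto
  then show ?case using \<open>a = b\<close> w' by simp
qed

lemma Cw_Cons: "Cw (a # w) = S a ` Cw w"
  by (simp add: Cw_def image_comp)

lemma words_Suc: "words (Suc n) = (\<lambda>(a,w). a # w) ` ({0,2} \<times> words n)"
  by (auto simp: words_def length_Suc_conv image_iff)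

lemma finite_words: "finite (words n)"
proof -
  have "words n = {xs. set xs \<subseteq> {0,2::nat} \<and> length xs = n}" by (auto simp: words_def)
  then show ?thesis using finite_lists_length_eq[of "{0,2::nat}" n] by simp
qed

lemma card_words: "card (words n) = 2 ^ n"
proof -
  have "words n = {xs. set xs \<subseteq> {0,2::nat} \<and> length xs = n}" by (auto simp: words_def)
  then show ?thesis using card_lists_length_eq[of "{0,2::nat}" n] by (simp add: numeral_2_eq_2)
qed

definition U :: "nat \<Rightarrow> real set" where
  "U n = (\<Union>w\<in>words n. Sw w ` {0..1})"

lemma cantor_U: "cantor = (\<Inter>n. U n)" by (simp add: cantor_def U_def)

lemma U_0: "U 0 = {0..1}"
proof -
  have "words 0 = {[]}" by (auto simp: words_def)
  then show ?thesis by (simp add: U_def)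
qed

lemma U_Suc: "U (Suc n) = S 0 ` U n \<union> S 2 ` U n"
  unfolding U_def words_Suc by (auto simp: image_comp image_Union)

lemma cantor_sub: "cantor \<subseteq> {0..1}"
  unfolding cantor_U using U_0 by blast

lemma Cw_sub: "Cw w \<subseteq> Sw w ` {0..1}"
  using cantor_sub by (auto simp: Cw_def)

lemma Cw_disj:
  assumes "w \<in> words n" "w' \<in> words n" "x \<in> Cw w" "x \<in> Cw w'"
  shows "w = w'"
proof -
  obtain a b where "a \<in> {0..1}" "b \<in> {0..1}" "x = Sw w a" "x = Sw w' b"
    using Cw_sub assms by blast
  then show ?thesis using Sw_inj_words[of w w' a b] assms by (auto simp: words_def)
qed

lemma U_sub: "U n \<subseteq> {0..1}"
  using Sw_range by (auto simp: U_def words_def)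

locale CM =
  fixes M :: "real measure"
  assumes cm: "is_cantor_measure M"
begin

lemma prob: "prob_space M" using cm by (simp add: is_cantor_measure_def)

sublocale prob_space M by (rule prob)

lemma sets_M: "sets M = sets (restrict_space borel {0..1})"
  using cm by (simp add: is_cantor_measure_def)

lemma space_M: "space M = {0..1}"
  using sets_eq_imp_space_eq[OF sets_M] by (simp add: space_restrict_space)

lemma in_sets_M: "A \<in> sets M \<longleftrightarrow> A \<subseteq> {0..1} \<and> A \<in> sets borel"
  unfolding sets_M by (subst sets_restrict_space_iff) auto

lemma S_image_sets:
  assumes "X \<in> sets M" "a \<in> {0,2}"
  shows "S a ` X \<in> sets M"
proof -
  have X: "X \<subseteq> {0..1}" "X \<in> sets borel" using assms in_sets_M by auto
  have eq: "S a ` X = (\<lambda>y. 3 * y - real a) -` X"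
  proof
    show "S a ` X \<subseteq> (\<lambda>y. 3 * y - real a) -` X"
    proof
      fix y assume "y \<in> S a ` X"
      then obtain x where "x \<in> X" "y = S a x" by blast
      then have "3 * y - real a = x" by (simp add: S_def)
      then show "y \<in> (\<lambda>y. 3 * y - real a) -` X" using \<open>x \<in> X\<close> by simp
    qed
    show "(\<lambda>y. 3 * y - real a) -` X \<subseteq> S a ` X"
    proof
      fix y assume "y \<in> (\<lambda>y. 3 * y - real a) -` X"
      then have "3 * y - real a \<in> X" by simp
      moreover have "y = S a (3 * y - real a)" by (simp add: S_def)
      ultimately show "y \<in> S a ` X" by blast
    qed
  qed
  have "(\<lambda>y. 3 * y - real a) -` X \<in> sets borel"
    by (rule measurable_sets_borel[OF _ X(2)]) measurable
  moreover have "S a ` X \<subseteq> {0..1}" using X assms by (auto simp: S_def)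
  ultimately show ?thesis using eq in_sets_M by auto
qed

lemma self_sim:
  assumes X: "X \<in> sets M" and Y: "Y \<in> sets M"
  shows "measure M (S 0 ` X \<union> S 2 ` Y) = measure M X / 2 + measure M Y / 2"
proof -
  let ?A = "S 0 ` X \<union> S 2 ` Y"
  have XY: "X \<subseteq> {0..1}" "Y \<subseteq> {0..1}" using X Y in_sets_M by auto
  have A: "?A \<in> sets M" using S_image_sets X Y by auto
  have e1: "S0 -` ?A \<inter> space M = X"
  proof -
    have "S0 -` ?A \<inter> {0..1} = X"
      using XY by (auto simp: S0_def S_def)
    then show ?thesis by (simp add: space_M)
  qed
  have e2: "S2 -` ?A \<inter> space M = Y"
  proof -
    have "S2 -` ?A \<inter> {0..1} = Y"
      using XY by (auto simp: S2_def S_def)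
    then show ?thesis by (simp add: space_M)
  qed
  have "emeasure M ?A = ennreal (1/2) * emeasure M X + ennreal (1/2) * emeasure M Y"
    using cm A e1 e2 unfolding is_cantor_measure_def by metis
  moreover have "ennreal (1/2) * emeasure M X = ennreal (1/2 * measure M X)"
    by (simp only: emeasure_eq_measure, rule ennreal_mult[symmetric]) auto
  moreover have "ennreal (1/2) * emeasure M Y = ennreal (1/2 * measure M Y)"
    by (simp only: emeasure_eq_measure, rule ennreal_mult[symmetric]) auto
  ultimately have "ennreal (measure M ?A) = ennreal (1/2 * measure M X + 1/2 * measure M Y)"
    by (simp only: emeasure_eq_measure ennreal_plus[symmetric] measure_nonneg mult_nonneg_nonneg)
  then have "measure M ?A = 1/2 * measure M X + 1/2 * measure M Y"
    by (subst (asm) ennreal_inj) auto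
  then show ?thesis by simp
qed

lemma U_sets: "U n \<in> sets M"
proof -
  have "Sw w ` {0..1} \<in> sets M" if "w \<in> words n" for w
  proof -
    have "Sw w ` {0..1} = (\<lambda>x. x / 3 ^ length w + Sw w 0) ` {0..1}"
      by (rule image_cong[OF refl]) (rule Sw_affine)
    also have "\<dots> = {Sw w 0 .. Sw w 0 + 1 / 3 ^ length w}"
      by (auto simp: image_iff field_simps intro!: bexI[where x="(_ - Sw w 0) * 3 ^ length w"])
    finally have "Sw w ` {0..1} \<in> sets borel" by simp
    moreover have "Sw w ` {0..1} \<subseteq> {0..1}" using Sw_range that by (auto simp: words_def)
    ultimately show ?thesis using in_sets_M by auto
  qed
  then show ?thesis unfolding U_def using finite_words by auto
qed

lemma U_measure: "measure M (U n) = 1"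
proof (induction n)
  case 0 then show ?case using prob_space by (simp add: U_0 space_M)
next
  case (Suc n) then show ?case by (simp add: U_Suc self_sim U_sets)
qed

lemma cantor_sets: "cantor \<in> sets M"
  unfolding cantor_U using U_sets by auto

lemma cantor_measure: "measure M cantor = 1"
proof -
  have "AE x in M. x \<in> U n" for n using U_measure U_sets prob_eq_1 by blast
  then have "AE x in M. \<forall>n. x \<in> U n" by (simp add: AE_all_countable)
  then have "AE x in M. x \<in> cantor" by (simp add: cantor_U)
  then show ?thesis using cantor_sets prob_eq_1 by blast
qed

lemma S_image_measure:
  assumes "X \<in> sets M" "a \<in> {0,2}"
  shows "measure M (S a ` X) = measure M X / 2"
  using assms self_sim[of X "{}"] self_sim[of "{}" X] by auto

lemma Cw_sets: "set w \<subseteq> {0,2} \<Longrightarrow> Cw w \<in> sets M"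
proof (induction w)
  case Nil then show ?case by (simp add: Cw_def cantor_sets)
next
  case (Cons a w) then show ?case by (simp add: Cw_Cons S_image_sets)
qed

lemma Cw_measure: "set w \<subseteq> {0,2} \<Longrightarrow> measure M (Cw w) = (1/2) ^ length w"
proof (induction w)
  case Nil then show ?case by (simp add: Cw_def cantor_measure)
next
  case (Cons a w) then show ?case by (simp add: Cw_Cons S_image_measure Cw_sets)
qed

lemma Cw_words_sets: "w \<in> words n \<Longrightarrow> Cw w \<in> sets M"
  by (simp add: words_def Cw_sets)

lemma Cw_words_measure: "w \<in> words n \<Longrightarrow> measure M (Cw w) = (1/2) ^ n"
  by (simp add: words_def Cw_measure)

lemma AE_in_some_Cw: "AE x in M. \<exists>w\<in>words n. x \<in> Cw w"
proof -
  have "measure M (\<Union>w\<in>words n. Cw w) = (\<Sum>w\<in>words n. measure M (Cw w))"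
    by (rule measure_finite_Union) (auto simp: finite_words Cw_words_sets disjoint_family_on_def dest: Cw_disj)
  also have "\<dots> = 1" by (simp add: Cw_words_measure card_words power_divide)
  moreover have U: "(\<Union>w\<in>words n. Cw w) \<in> sets M"
    using finite_words Cw_words_sets by (intro sets.finite_UN) auto
  ultimately have "AE x in M. x \<in> (\<Union>w\<in>words n. Cw w)"
    using prob_eq_1[OF U] by simp
  then show ?thesis by auto
qed

end

lemma CS_real_aux:
  fixes A B C :: real
  assumes "B \<ge> 0" "\<And>t. 0 \<le> A - 2*t*C + t^2*B"
  shows "C^2 \<le> A*B"
proof (cases "B = 0")
  case True
  have "C = 0"
  proof (rule ccontr)
    assume "C \<noteq> 0"
    have "0 \<le> A - 2*((A+1)/(2*C))*C + ((A+1)/(2*C))^2*B" by (rule assms)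
    then show False using True \<open>C \<noteq> 0\<close> by (simp add: field_simps)
  qed
  then show ?thesis using assms(2)[of 0] True by simp
next
  case False
  then have B0: "B > 0" using assms(1) by simp
  have "0 \<le> A - 2*(C/B)*C + (C/B)^2*B" by (rule assms)
  then have "0 \<le> A - C^2/B" using B0 by (simp add: field_simps power2_eq_square)
  then show ?thesis using B0 by (simp add: field_simps)
qed

lemma abs_le_1_sq: "\<bar>x::real\<bar> \<le> 1 + x^2"
proof (cases "\<bar>x\<bar> \<le> 1")
  case True then show ?thesis by (smt (verit) zero_le_power2)
next
  case False
  then have "\<bar>x\<bar> * 1 \<le> \<bar>x\<bar> * \<bar>x\<bar>" by (intro mult_left_mono) auto
  then have "\<bar>x\<bar> \<le> x * x" by (simp add: abs_mult_self_eq)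
  then show ?thesis by (simp add: power2_eq_square)
qed

lemma abs_prod_le_sq: "\<bar>a * b::real\<bar> \<le> a^2 + b^2"
proof -
  have "0 \<le> (\<bar>a\<bar> - \<bar>b\<bar>)^2" by simp
  then have "2 * (\<bar>a\<bar> * \<bar>b\<bar>) \<le> a^2 + b^2" by (simp add: power2_eq_square algebra_simps abs_mult_self_eq)
  moreover have "\<bar>a\<bar> * \<bar>b\<bar> \<ge> 0" by simp
  ultimately show ?thesis by (simp only: abs_mult)
qed

context CM
begin

lemma L2_meas[measurable_dest]: "f \<in> L2 M \<Longrightarrow> f \<in> borel_measurable M" by (simp add: L2_def)
lemma L2_sq: "f \<in> L2 M \<Longrightarrow> integrable M (\<lambda>x. (f x)^2)" by (simp add: L2_def)
lemma L2_I: "f \<in> borel_measurable M \<Longrightarrow> integrable M (\<lambda>x. (f x)^2) \<Longrightarrow> f \<in> L2 M"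
  by (simp add: L2_def)

lemma L2_integrable: assumes "f \<in> L2 M" shows "integrable M f"
proof -
  have i: "integrable M (\<lambda>x. 1 + (f x)^2)" using L2_sq[OF assms] by simp
  have ae: "AE x in M. norm (f x) \<le> norm (1 + (f x)^2)" using abs_le_1_sq by auto
  show ?thesis using Bochner_Integration.integrable_bound[OF i _ ae] assms by (auto simp: L2_def)
qed

lemma L2_prod: assumes "f \<in> L2 M" "g \<in> L2 M" shows "integrable M (\<lambda>x. f x * g x)"
proof -
  have i: "integrable M (\<lambda>x. (f x)^2 + (g x)^2)" using L2_sq assms by simp
  have ae: "AE x in M. norm (f x * g x) \<le> norm ((f x)^2 + (g x)^2)" using abs_prod_le_sq by auto
  show ?thesis using Bochner_Integration.integrable_bound[OF i _ ae] assms by (auto simp: L2_def)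
qed

lemma L2_add: assumes "f \<in> L2 M" "g \<in> L2 M" shows "(\<lambda>x. f x + g x) \<in> L2 M"
proof -
  have "(\<lambda>x. (f x + g x)^2) = (\<lambda>x. (f x)^2 + 2 * (f x * g x) + (g x)^2)"
    by (simp add: power2_eq_square algebra_simps)
  moreover have "integrable M (\<lambda>x. (f x)^2 + 2 * (f x * g x) + (g x)^2)"
    using L2_sq L2_prod assms by simp
  ultimately show ?thesis using assms by (intro L2_I) (auto simp: L2_def)
qed

lemma L2_cmult: assumes "f \<in> L2 M" shows "(\<lambda>x. c * f x) \<in> L2 M"
proof -
  have "(\<lambda>x. (c * f x)^2) = (\<lambda>x. c^2 * (f x)^2)" by (simp add: power_mult_distrib)
  then show ?thesis using assms by (intro L2_I) (auto simp: L2_def)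
qed

lemma L2_minus: assumes "f \<in> L2 M" shows "(\<lambda>x. - f x) \<in> L2 M"
  using L2_cmult[OF assms, of "-1"] by simp

lemma L2_diff: assumes "f \<in> L2 M" "g \<in> L2 M" shows "(\<lambda>x. f x - g x) \<in> L2 M"
  using L2_add[OF assms(1) L2_minus[OF assms(2)]] by simp

lemma L2_zero: "(\<lambda>x. 0) \<in> L2 M" by (intro L2_I) auto

lemma L2_sum: "finite I \<Longrightarrow> (\<And>i. i \<in> I \<Longrightarrow> h i \<in> L2 M) \<Longrightarrow> (\<lambda>x. \<Sum>i\<in>I. h i x) \<in> L2 M"
proof (induction I rule: finite_induct)
  case empty then show ?case using L2_zero by simp
next
  case (insert a F) then show ?case by (simp add: L2_add)
qed

lemma L2_bounded: assumes "f \<in> borel_measurable M" "\<And>x. \<bar>f x\<bar> \<le> B" shows "f \<in> L2 M"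
proof (rule L2_I[OF assms(1)])
  show "integrable M (\<lambda>x. (f x)^2)"
  proof -
    have "(f x)^2 \<le> B^2" for x
      using abs_le_square_iff[of "f x" B] assms(2)[of x] by auto
    then have ae: "AE x in M. norm ((f x)^2) \<le> norm (B^2)" by auto
    show ?thesis using Bochner_Integration.integrable_bound[OF _ _ ae] assms by auto
  qed
qed

lemma L2_indicator: "A \<in> sets M \<Longrightarrow> indicator A \<in> L2 M"
  by (rule L2_bounded[where B=1]) (auto simp: indicator_def)

lemma L2_cong: "f \<in> L2 M \<Longrightarrow> g \<in> borel_measurable M \<Longrightarrow> AE x in M. f x = g x \<Longrightarrow> g \<in> L2 M"
proof -
  assume a: "f \<in> L2 M" "g \<in> borel_measurable M" "AE x in M. f x = g x"
  have "AE x in M. (f x)^2 = (g x)^2" using a(3) by auto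
  then have "integrable M (\<lambda>x. (f x)^2) = integrable M (\<lambda>x. (g x)^2)"
    using a by (intro integrable_cong_AE) auto
  then show ?thesis using a by (auto simp: L2_def)
qed

lemma l2norm_nonneg: "l2norm M f \<ge> 0"
  by (simp add: l2norm_def)

lemma l2norm_sq: "(l2norm M f)^2 = (\<integral>x. (f x)^2 \<partial>M)"
  by (simp add: l2norm_def)

lemma l2norm_cong:
  assumes "f \<in> borel_measurable M" "g \<in> borel_measurable M" "AE x in M. f x = g x"
  shows "l2norm M f = l2norm M g"
proof -
  have "(\<integral>x. (f x)^2 \<partial>M) = (\<integral>x. (g x)^2 \<partial>M)"
    by (rule integral_cong_AE) (use assms in auto)
  then show ?thesis by (simp add: l2norm_def)
qed

lemma l2norm_cmult: "l2norm M (\<lambda>x. c * f x) = \<bar>c\<bar> * l2norm M f"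
proof -
  have "(\<integral>x. (c * f x)^2 \<partial>M) = c^2 * (\<integral>x. (f x)^2 \<partial>M)"
    by (simp add: power_mult_distrib)
  then show ?thesis by (simp add: l2norm_def real_sqrt_mult)
qed

lemma l2norm_abs: "l2norm M (\<lambda>x. \<bar>f x\<bar>) = l2norm M f"
  by (simp add: l2norm_def)

lemma l2norm_zero: "l2norm M (\<lambda>x. 0) = 0"
  by (simp add: l2norm_def)

lemma L2_expand:
  assumes "f \<in> L2 M" "g \<in> L2 M"
  shows "(\<integral>x. (f x + t * g x)^2 \<partial>M) = (\<integral>x. (f x)^2 \<partial>M) + 2*t*(\<integral>x. f x * g x \<partial>M) + t^2*(\<integral>x. (g x)^2 \<partial>M)"
proof -
  have eq: "(\<lambda>x. (f x + t * g x)^2) = (\<lambda>x. ((f x)^2 + (2*t) * (f x * g x)) + t^2 * (g x)^2)"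
    by (simp add: power2_eq_square algebra_simps)
  have i1: "integrable M (\<lambda>x. (f x)^2)" "integrable M (\<lambda>x. (g x)^2)" "integrable M (\<lambda>x. f x * g x)"
    using assms L2_sq L2_prod by auto
  show ?thesis unfolding eq
    by (subst Bochner_Integration.integral_add; (subst Bochner_Integration.integral_add)?) (use i1 in auto)
qed

lemma CS:
  assumes "f \<in> L2 M" "g \<in> L2 M"
  shows "\<bar>\<integral>x. f x * g x \<partial>M\<bar> \<le> l2norm M f * l2norm M g"
proof -
  define A where "A = (\<integral>x. (f x)^2 \<partial>M)"
  define B where "B = (\<integral>x. (g x)^2 \<partial>M)"
  define C where "C = (\<integral>x. f x * g x \<partial>M)"
  have "0 \<le> A - 2*t*C + t^2*B" for t
  proof -
    have "0 \<le> (\<integral>x. (f x + (-t) * g x)^2 \<partial>M)" by simp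
    also have "\<dots> = A - 2*t*C + t^2*B" unfolding A_def B_def C_def
      by (subst L2_expand[OF assms]) simp
    finally show ?thesis .
  qed
  moreover have "B \<ge> 0" unfolding B_def by simp
  ultimately have "C^2 \<le> A * B" by (intro CS_real_aux) auto
  then have "sqrt (C^2) \<le> sqrt (A * B)" by (rule real_sqrt_le_mono)
  then show ?thesis unfolding l2norm_def A_def B_def C_def by (simp add: real_sqrt_mult)
qed

lemma l2norm_add:
  assumes "f \<in> L2 M" "g \<in> L2 M"
  shows "l2norm M (\<lambda>x. f x + g x) \<le> l2norm M f + l2norm M g"
proof -
  have "(\<integral>x. (f x + g x)^2 \<partial>M) = (\<integral>x. (f x + 1 * g x)^2 \<partial>M)" by simp
  also have "\<dots> = (l2norm M f)^2 + 2 * (\<integral>x. f x * g x \<partial>M) + (l2norm M g)^2"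
    by (subst L2_expand[OF assms]) (simp add: l2norm_sq)
  also have "\<dots> \<le> (l2norm M f)^2 + 2 * (l2norm M f * l2norm M g) + (l2norm M g)^2"
    using CS[OF assms] by simp
  also have "\<dots> = (l2norm M f + l2norm M g)^2" by (simp add: power2_eq_square algebra_simps)
  finally have "sqrt (\<integral>x. (f x + g x)^2 \<partial>M) \<le> sqrt ((l2norm M f + l2norm M g)^2)"
    by (rule real_sqrt_le_mono)
  then show ?thesis using l2norm_nonneg by (simp add: l2norm_def[of M "\<lambda>x. f x + g x"])
qed

lemma l2norm_diff:
  assumes "f \<in> L2 M" "g \<in> L2 M"
  shows "l2norm M (\<lambda>x. f x - g x) \<le> l2norm M f + l2norm M g"
  using l2norm_add[OF assms(1) L2_minus[OF assms(2)]] l2norm_cmult[of "-1" g] by simp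

lemma l2norm_sum:
  "finite I \<Longrightarrow> (\<And>i. i \<in> I \<Longrightarrow> h i \<in> L2 M) \<Longrightarrow> l2norm M (\<lambda>x. \<Sum>i\<in>I. h i x) \<le> (\<Sum>i\<in>I. l2norm M (h i))"
proof (induction I rule: finite_induct)
  case empty then show ?case by (simp add: l2norm_zero)
next
  case (insert a F)
  have "l2norm M (\<lambda>x. \<Sum>i\<in>insert a F. h i x) = l2norm M (\<lambda>x. h a x + (\<Sum>i\<in>F. h i x))"
    using insert by simp
  also have "\<dots> \<le> l2norm M (h a) + l2norm M (\<lambda>x. \<Sum>i\<in>F. h i x)"
    using insert by (intro l2norm_add L2_sum) auto
  also have "\<dots> \<le> l2norm M (h a) + (\<Sum>i\<in>F. l2norm M (h i))" using insert by simp
  finally show ?case using insert by simp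
qed


lemma L2_abs: "f \<in> L2 M \<Longrightarrow> (\<lambda>x. \<bar>f x\<bar>) \<in> L2 M"
  by (intro L2_I) (auto simp: L2_def)

lemma L2_series:
  assumes h: "\<And>n. h n \<in> L2 M" and S: "summable (\<lambda>n. l2norm M (h n))"
  shows "AE x in M. summable (\<lambda>n. \<bar>h n x\<bar>)"
    and "(\<lambda>x. \<Sum>n. h n x) \<in> L2 M"
    and "l2norm M (\<lambda>x. \<Sum>n. h n x) \<le> (\<Sum>n. l2norm M (h n))"
proof -
  define T where "T = (\<Sum>n. l2norm M (h n))"
  have T0: "T \<ge> 0" unfolding T_def using S l2norm_nonneg by (intro suminf_nonneg) auto
  have hm[measurable]: "h n \<in> borel_measurable M" for n using h by auto
  have partial: "(\<Sum>n<m. l2norm M (h n)) \<le> T" for m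
    unfolding T_def using S l2norm_nonneg by (intro sum_le_suminf) auto
  define G where "G m x = (\<Sum>n<m. \<bar>h n x\<bar>)" for m x
  have Gm[measurable]: "G m \<in> borel_measurable M" for m unfolding G_def by measurable
  have GL2: "G m \<in> L2 M" for m unfolding G_def using h by (intro L2_sum L2_abs) auto
  have Gnorm: "l2norm M (G m) \<le> T" for m
  proof -
    have "l2norm M (G m) \<le> (\<Sum>n<m. l2norm M (\<lambda>x. \<bar>h n x\<bar>))"
      unfolding G_def using h by (intro l2norm_sum L2_abs) auto
    also have "\<dots> = (\<Sum>n<m. l2norm M (h n))" by (simp add: l2norm_abs)
    finally show ?thesis using partial[of m] by simp
  qed
  have GT: "(\<integral>\<^sup>+x. ennreal ((G m x)^2) \<partial>M) \<le> ennreal (T^2)" for m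
  proof -
    have "(\<integral>\<^sup>+x. ennreal ((G m x)^2) \<partial>M) = ennreal (\<integral>x. (G m x)^2 \<partial>M)"
      using GL2[of m] by (intro nn_integral_eq_integral) (auto simp: L2_def)
    also have "\<dots> = ennreal ((l2norm M (G m))^2)" by (simp add: l2norm_sq)
    also have "\<dots> \<le> ennreal (T^2)"
      using Gnorm[of m] l2norm_nonneg by (intro ennreal_leI power_mono) auto
    finally show ?thesis .
  qed
  have Gmono: "G m x \<le> G m' x" if "m \<le> m'" for m m' x
    unfolding G_def using that by (intro sum_mono2) auto
  have inc: "incseq (\<lambda>m x. ennreal ((G m x)^2))"
    by (auto simp: incseq_def le_fun_def G_def intro!: ennreal_leI power_mono Gmono[unfolded G_def])
  have "(\<integral>\<^sup>+x. (SUP m. ennreal ((G m x)^2)) \<partial>M) = (SUP m. (\<integral>\<^sup>+x. ennreal ((G m x)^2) \<partial>M))"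
    by (rule nn_integral_monotone_convergence_SUP[OF inc]) measurable
  also have "\<dots> \<le> ennreal (T^2)" by (rule SUP_least) (rule GT)
  finally have "(\<integral>\<^sup>+x. (SUP m. ennreal ((G m x)^2)) \<partial>M) \<noteq> \<infinity>"
    using ennreal_neq_top top.extremum_uniqueI by (metis infinity_ennreal_def)
  then have fin: "AE x in M. (SUP m. ennreal ((G m x)^2)) \<noteq> \<infinity>"
    by (intro nn_integral_noteq_infinite) measurable
  show sumAE: "AE x in M. summable (\<lambda>n. \<bar>h n x\<bar>)"
    using fin
  proof eventually_elim
    case (elim x)
    define B where "B = enn2real (SUP m. ennreal ((G m x)^2))"
    have "(G m x)^2 \<le> B" for m
    proof -
      have "ennreal ((G m x)^2) \<le> (SUP m. ennreal ((G m x)^2))" by (rule SUP_upper) auto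
      then have "enn2real (ennreal ((G m x)^2)) \<le> B"
        unfolding B_def by (rule enn2real_mono) (use elim in \<open>auto simp: less_top[symmetric]\<close>)
      then show ?thesis by simp
    qed
    then have "G m x \<le> sqrt B" for m by (intro real_le_rsqrt) auto
    then show ?case unfolding G_def by (intro summableI_nonneg_bounded) auto
  qed
  define H where "H x = (\<Sum>n. h n x)" for x
  have Hm[measurable]: "H \<in> borel_measurable M" unfolding H_def by measurable
  define P where "P m x = (\<Sum>n<m. h n x)" for m x
  have Pm[measurable]: "P m \<in> borel_measurable M" for m unfolding P_def by measurable
  have PL2: "P m \<in> L2 M" for m unfolding P_def using h by (intro L2_sum) auto
  have PT: "(\<integral>\<^sup>+x. ennreal ((P m x)^2) \<partial>M) \<le> ennreal (T^2)" for m
  proof -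
    have "(\<integral>\<^sup>+x. ennreal ((P m x)^2) \<partial>M) = ennreal (\<integral>x. (P m x)^2 \<partial>M)"
      using PL2[of m] by (intro nn_integral_eq_integral) (auto simp: L2_def)
    also have "\<dots> = ennreal ((l2norm M (P m))^2)" by (simp add: l2norm_sq)
    also have "\<dots> \<le> ennreal (T^2)"
    proof -
      have "l2norm M (P m) \<le> (\<Sum>n<m. l2norm M (h n))" unfolding P_def using h by (intro l2norm_sum) auto
      then have "l2norm M (P m) \<le> T" using partial[of m] by simp
      then show ?thesis using l2norm_nonneg by (intro ennreal_leI power_mono) auto
    qed
    finally show ?thesis .
  qed
  have lim: "AE x in M. liminf (\<lambda>m. ennreal ((P m x)^2)) = ennreal ((H x)^2)"
    using sumAE
  proof eventually_elim
    case (elim x)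
    then have "summable (\<lambda>n. h n x)" by (rule summable_rabs_cancel)
    then have "(\<lambda>m. P m x) \<longlonglongrightarrow> H x" unfolding P_def H_def by (rule summable_LIMSEQ)
    then have "(\<lambda>m. ennreal ((P m x)^2)) \<longlonglongrightarrow> ennreal ((H x)^2)"
      by (intro tendsto_ennrealI tendsto_power)
    then show ?case by (intro lim_imp_Liminf) auto
  qed
  have "(\<integral>\<^sup>+x. ennreal ((H x)^2) \<partial>M) = (\<integral>\<^sup>+x. liminf (\<lambda>m. ennreal ((P m x)^2)) \<partial>M)"
    using lim by (intro nn_integral_cong_AE) auto
  also have "\<dots> \<le> liminf (\<lambda>m. (\<integral>\<^sup>+x. ennreal ((P m x)^2) \<partial>M))"
    by (rule nn_integral_liminf) measurable
  also have "\<dots> \<le> limsup (\<lambda>m. (\<integral>\<^sup>+x. ennreal ((P m x)^2) \<partial>M))"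
    by (rule Liminf_le_Limsup) simp
  also have "\<dots> \<le> ennreal (T^2)"
    by (rule Limsup_bounded) (use PT in auto)
  finally have HT: "(\<integral>\<^sup>+x. ennreal ((H x)^2) \<partial>M) \<le> ennreal (T^2)" .
  have intH: "integrable M (\<lambda>x. (H x)^2)"
  proof (rule integrableI_bounded)
    have "(\<integral>\<^sup>+x. ennreal (norm ((H x)^2)) \<partial>M) = (\<integral>\<^sup>+x. ennreal ((H x)^2) \<partial>M)" by simp
    also have "\<dots> < \<infinity>" using HT by (metis ennreal_less_top infinity_ennreal_def order_le_less_trans)
    finally show "(\<integral>\<^sup>+x. ennreal (norm ((H x)^2)) \<partial>M) < \<infinity>" .
  qed measurable
  show "(\<lambda>x. \<Sum>n. h n x) \<in> L2 M" using intH Hm unfolding H_def by (intro L2_I) auto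
  have "ennreal (\<integral>x. (H x)^2 \<partial>M) = (\<integral>\<^sup>+x. ennreal ((H x)^2) \<partial>M)"
    using intH by (intro nn_integral_eq_integral[symmetric]) auto
  then have "ennreal (\<integral>x. (H x)^2 \<partial>M) \<le> ennreal (T^2)" using HT by simp
  then have "(\<integral>x. (H x)^2 \<partial>M) \<le> T^2" by (subst (asm) ennreal_le_iff) auto
  then have "sqrt (\<integral>x. (H x)^2 \<partial>M) \<le> sqrt (T^2)" by (rule real_sqrt_le_mono)
  then show "l2norm M (\<lambda>x. \<Sum>n. h n x) \<le> (\<Sum>n. l2norm M (h n))"
    using T0 unfolding l2norm_def H_def T_def by simp
qed

end

context CM
begin

lemma Cw_space: "w \<in> words n \<Longrightarrow> Cw w \<subseteq> space M"
  using Cw_words_sets sets.sets_into_space by blast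

lemma gen_sub: "Cw ` words n \<subseteq> Pow (space M)"
  using Cw_space by auto

lemma space_Fn: "space (Fn M n) = space M"
  unfolding Fn_def using gen_sub by (simp add: space_measure_of_conv)

lemma sets_Fn: "sets (Fn M n) = sigma_sets (space M) (Cw ` words n)"
  unfolding Fn_def using gen_sub by (simp add: sets_measure_of_conv)

lemma Cw_Fn: "w \<in> words n \<Longrightarrow> Cw w \<in> sets (Fn M n)"
  unfolding sets_Fn by auto

lemma subalg_Fn: "subalgebra M (Fn M n)"
proof -
  have "sigma_sets (space M) (Cw ` words n) \<subseteq> sets M"
    by (rule sets.sigma_sets_subset) (auto simp: Cw_words_sets)
  then show ?thesis unfolding subalgebra_def using space_Fn sets_Fn by auto
qed

lemma sfs: "sigma_finite_subalgebra M (Fn M n)"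
  by (rule finite_measure_subalgebra_is_sigma_finite)
     (simp add: finite_measure_subalgebra_def finite_measure_subalgebra_axioms_def subalg_Fn finite_measure_axioms)

lemma E_meas[measurable]: "En M n f \<in> borel_measurable M"
  unfolding En_def by simp

lemma E_measF: "En M n f \<in> borel_measurable (Fn M n)"
  unfolding En_def by simp

lemma E_L2:
  assumes "f \<in> L2 M"
  shows "En M n f \<in> L2 M" "l2norm M (En M n f) \<le> l2norm M f"
proof -
  interpret s: sigma_finite_subalgebra M "Fn M n" by (rule sfs)
  have fi: "integrable M f" using L2_integrable[OF assms] .
  have qi: "integrable M (\<lambda>x. (f x)^2)" using L2_sq[OF assms] .
  have J: "AE x in M. (En M n f x)^2 \<le> real_cond_exp M (Fn M n) (\<lambda>x. (f x)^2) x"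
    unfolding En_def
    using s.real_cond_exp_jensens_inequality(2)[of f UNIV 0 0 power2] fi qi convex_power2 by auto
  have ci: "integrable M (real_cond_exp M (Fn M n) (\<lambda>x. (f x)^2))"
    using s.real_cond_exp_int(1)[OF qi] .
  have int2: "integrable M (\<lambda>x. (En M n f x)^2)"
    by (rule Bochner_Integration.integrable_bound[OF ci]) (use J in auto)
  show L: "En M n f \<in> L2 M" using int2 by (intro L2_I) auto
  have "(\<integral>x. (En M n f x)^2 \<partial>M) \<le> (\<integral>x. real_cond_exp M (Fn M n) (\<lambda>x. (f x)^2) x \<partial>M)"
    by (rule integral_mono_AE[OF int2 ci J])
  also have "\<dots> = (\<integral>x. (f x)^2 \<partial>M)" using s.real_cond_exp_int(2)[OF qi] .
  finally show "l2norm M (En M n f) \<le> l2norm M f" unfolding l2norm_def by (rule real_sqrt_le_mono)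
qed

lemma E_lin:
  assumes "f \<in> L2 M" "g \<in> L2 M"
  shows "AE x in M. En M n (\<lambda>y. a * f y + b * g y) x = a * En M n f x + b * En M n g x"
proof -
  interpret s: sigma_finite_subalgebra M "Fn M n" by (rule sfs)
  have fi: "integrable M f" "integrable M g" using L2_integrable assms by auto
  have "AE x in M. En M n (\<lambda>y. a * f y + b * g y) x = En M n (\<lambda>y. a * f y) x + En M n (\<lambda>y. b * g y) x"
    unfolding En_def using fi by (intro s.real_cond_exp_add) auto
  moreover have "AE x in M. En M n (\<lambda>y. a * f y) x = a * En M n f x"
    unfolding En_def using fi by (intro s.real_cond_exp_cmult) auto
  moreover have "AE x in M. En M n (\<lambda>y. b * g y) x = b * En M n g x"
    unfolding En_def using fi by (intro s.real_cond_exp_cmult) auto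
  ultimately show ?thesis by eventually_elim simp
qed

lemma E_cong:
  assumes "f \<in> borel_measurable M" "g \<in> borel_measurable M" "AE x in M. f x = g x"
  shows "AE x in M. En M n f x = En M n g x"
proof -
  interpret s: sigma_finite_subalgebra M "Fn M n" by (rule sfs)
  show ?thesis unfolding En_def using assms by (intro s.real_cond_exp_cong) auto
qed

lemma E_self:
  assumes "g \<in> L2 M" "g \<in> borel_measurable (Fn M n)"
  shows "AE x in M. En M n g x = g x"
proof -
  interpret s: sigma_finite_subalgebra M "Fn M n" by (rule sfs)
  show ?thesis unfolding En_def using assms L2_integrable by (intro s.real_cond_exp_F_meas) auto
qed

lemma E_inner:
  assumes "f \<in> L2 M"
  shows "(\<integral>x. En M n f x * f x \<partial>M) = (\<integral>x. (En M n f x)^2 \<partial>M)"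
proof -
  interpret s: sigma_finite_subalgebra M "Fn M n" by (rule sfs)
  have "integrable M (\<lambda>x. En M n f x * f x)" using L2_prod E_L2 assms by auto
  then have "(\<integral>x. En M n f x * real_cond_exp M (Fn M n) f x \<partial>M) = (\<integral>x. En M n f x * f x \<partial>M)"
    using assms by (intro s.real_cond_exp_intg(2)) (auto simp: E_measF)
  then show ?thesis by (simp add: En_def power2_eq_square)
qed

lemma Fn_saturated:
  assumes "A \<in> sigma_sets (space M) (Cw ` words n)" "w \<in> words n" "x \<in> Cw w" "y \<in> Cw w"
  shows "x \<in> A \<longleftrightarrow> y \<in> A"
  using assms(1)
proof (induction rule: sigma_sets.induct)
  case (Basic a)
  then obtain w' where w': "w' \<in> words n" "a = Cw w'" by auto
  show ?case
  proof
    assume "x \<in> a" then have "w' = w" using Cw_disj w' assms by blast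
    then show "y \<in> a" using w' assms by simp
  next
    assume "y \<in> a" then have "w' = w" using Cw_disj w' assms by blast
    then show "x \<in> a" using w' assms by simp
  qed
next
  case (Compl a)
  have "x \<in> space M" "y \<in> space M" using Cw_space assms by auto
  then show ?case using Compl by auto
qed auto

lemma Fn_const:
  fixes g :: "real \<Rightarrow> real"
  assumes "g \<in> borel_measurable (Fn M n)" "w \<in> words n" "x \<in> Cw w" "y \<in> Cw w"
  shows "g x = g y"
proof -
  have xs: "x \<in> space M" using Cw_space assms by auto
  have "g -` {g x} \<inter> space (Fn M n) \<in> sets (Fn M n)"
    using assms(1) by (rule measurable_sets) (auto intro: borel_closed)
  then have "g -` {g x} \<inter> space M \<in> sigma_sets (space M) (Cw ` words n)"
    by (simp add: sets_Fn space_Fn)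
  moreover have "x \<in> g -` {g x} \<inter> space M" using xs by simp
  ultimately have "y \<in> g -` {g x} \<inter> space M" using Fn_saturated assms by blast
  then show ?thesis by simp
qed

definition pt :: "nat list \<Rightarrow> real" where "pt w = (SOME x. x \<in> Cw w)"

lemma pt_in: assumes "w \<in> words n" shows "pt w \<in> Cw w"
proof -
  have "measure M (Cw w) > 0" using Cw_words_measure[OF assms] by simp
  then have "Cw w \<noteq> {}" by auto
  then show ?thesis unfolding pt_def by (simp add: some_in_eq)
qed

lemma step_at:
  assumes "w0 \<in> words n" "x \<in> Cw w0"
  shows "(\<Sum>w\<in>words n. c w * indicator (Cw w) x) = (c w0 :: real)"
proof -
  have "(\<Sum>w\<in>words n. c w * indicator (Cw w) x) = c w0 * indicator (Cw w0) x + (\<Sum>w\<in>words n - {w0}. c w * indicator (Cw w) x)"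
    by (rule sum.remove[OF finite_words assms(1)])
  also have "(\<Sum>w\<in>words n - {w0}. c w * indicator (Cw w) x) = 0"
    using Cw_disj assms by (intro sum.neutral) (auto simp: indicator_def)
  finally show ?thesis using assms by simp
qed

lemma step_out:
  assumes "\<not> (\<exists>w\<in>words n. x \<in> Cw w)"
  shows "(\<Sum>w\<in>words n. c w * indicator (Cw w) x) = (0::real)"
  using assms by (intro sum.neutral) (auto simp: indicator_def)

lemma Fn_repr:
  fixes g :: "real \<Rightarrow> real"
  assumes "g \<in> borel_measurable (Fn M n)"
  shows "AE x in M. g x = (\<Sum>w\<in>words n. g (pt w) * indicator (Cw w) x)"
  using AE_in_some_Cw[of n]
proof eventually_elim
  case (elim x)
  then obtain w0 where w0: "w0 \<in> words n" "x \<in> Cw w0" by auto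
  then have "g x = g (pt w0)" using Fn_const[OF assms w0(1) w0(2) pt_in[OF w0(1)]] by simp
  then show ?case using step_at[OF w0, of "\<lambda>w. g (pt w)"] by simp
qed

lemma step_sq_pt:
  "(\<Sum>w\<in>words n. (c w :: real) * indicator (Cw w) x)^2 = (\<Sum>w\<in>words n. (c w)^2 * indicator (Cw w) x)"
proof (cases "\<exists>w\<in>words n. x \<in> Cw w")
  case True
  then obtain w0 where w0: "w0 \<in> words n" "x \<in> Cw w0" by auto
  show ?thesis using step_at[OF w0, of c] step_at[OF w0, of "\<lambda>w. (c w)^2"] by simp
next
  case False
  show ?thesis using step_out[OF False, of c] step_out[OF False, of "\<lambda>w. (c w)^2"] by simp
qed

lemma step_meas[measurable]: "(\<lambda>x. \<Sum>w\<in>words n. (c w :: real) * indicator (Cw w) x) \<in> borel_measurable M"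
proof (rule borel_measurable_sum)
  fix w assume "w \<in> words n"
  then have [measurable]: "Cw w \<in> sets M" by (rule Cw_words_sets)
  show "(\<lambda>x. c w * indicator (Cw w) x) \<in> borel_measurable M" by measurable
qed

lemma step_measF: "(\<lambda>x. \<Sum>w\<in>words n. (c w :: real) * indicator (Cw w) x) \<in> borel_measurable (Fn M n)"
proof (rule borel_measurable_sum)
  fix w assume "w \<in> words n"
  then have [measurable]: "Cw w \<in> sets (Fn M n)" by (rule Cw_Fn)
  show "(\<lambda>x. c w * indicator (Cw w) x) \<in> borel_measurable (Fn M n)" by measurable
qed

lemma step_L2: "(\<lambda>x. \<Sum>w\<in>words n. (c w :: real) * indicator (Cw w) x) \<in> L2 M"
  using finite_words Cw_words_sets by (intro L2_sum L2_cmult L2_indicator) auto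

lemma step_int_sq:
  "(\<integral>x. (\<Sum>w\<in>words n. (c w :: real) * indicator (Cw w) x)^2 \<partial>M) = (\<Sum>w\<in>words n. (c w)^2) * (1/2)^n"
proof -
  have "(\<integral>x. (\<Sum>w\<in>words n. c w * indicator (Cw w) x)^2 \<partial>M) = (\<integral>x. (\<Sum>w\<in>words n. (c w)^2 * indicator (Cw w) x) \<partial>M)"
    by (simp only: step_sq_pt)
  also have "\<dots> = (\<Sum>w\<in>words n. (\<integral>x. (c w)^2 * indicator (Cw w) x \<partial>M))"
    by (rule Bochner_Integration.integral_sum) (auto intro!: integrable_real_indicator Cw_words_sets simp: emeasure_eq_measure)
  also have "\<dots> = (\<Sum>w\<in>words n. (c w)^2 * (1/2)^n)"
    using Cw_words_sets Cw_words_measure by (intro sum.cong) (auto simp: Bochner_Integration.integral_indicator)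
  finally show ?thesis by (simp add: sum_distrib_right)
qed

end

definition TN :: "real measure \<Rightarrow> nat \<Rightarrow> (real \<Rightarrow> real) \<Rightarrow> real \<Rightarrow> real" where
  "TN M N f x = (\<Sum>n<N. (1/2)^n * En M n f x)"

definition WN :: "nat \<Rightarrow> nat list set" where
  "WN N = (\<Union>n<N. words n)"

lemma sum_pow2: "(\<Sum>n<N. (2::nat)^n) + 1 = 2^N"
  by (induction N) auto

lemma finite_WN: "finite (WN N)"
  unfolding WN_def using finite_words by auto

lemma card_WN: "card (WN N) + 1 \<le> 2^N"
proof -
  have "card (WN N) \<le> (\<Sum>n<N. card (words n))"
    unfolding WN_def using finite_words by (intro card_UN_le) auto
  also have "\<dots> = (\<Sum>n<N. 2^n)" by (simp add: card_words)
  finally show ?thesis using sum_pow2[of N] by linarith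
qed

lemma WN_words: "w \<in> WN N \<Longrightarrow> w \<in> words (length w)"
  unfolding WN_def words_def by auto

context CM
begin

lemma hE_L2: "f \<in> L2 M \<Longrightarrow> (\<lambda>x. c * En M n f x) \<in> L2 M"
  by (intro L2_cmult E_L2)

lemma hE_norm: "f \<in> L2 M \<Longrightarrow> l2norm M (\<lambda>x. (1/2)^n * En M n f x) \<le> (1/2)^n * l2norm M f"
  by (simp add: l2norm_cmult E_L2)

lemma geo_summ: "summable (\<lambda>n. (1/2::real)^(n + N) * c)"
  by (intro summable_mult2) (simp add: power_add summable_mult2)

lemma geo_sum: "(\<Sum>n. (1/2::real)^(n + N) * c) = 2 * (1/2)^N * c"
proof -
  have "(\<Sum>n. (1/2::real)^(n + N) * c) = (\<Sum>n. (1/2)^n * ((1/2)^N * c))"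
    by (simp add: power_add mult_ac)
  also have "\<dots> = (\<Sum>n. (1/2::real)^n) * ((1/2)^N * c)"
    by (rule suminf_mult2[symmetric]) simp
  also have "\<dots> = 2 * (1/2)^N * c" by (simp add: suminf_geometric)
  finally show ?thesis .
qed

lemma tail_series:
  assumes f: "f \<in> L2 M"
  shows "AE x in M. summable (\<lambda>n. \<bar>(1/2)^(n+N) * En M (n+N) f x\<bar>)"
    and "(\<lambda>x. \<Sum>n. (1/2)^(n+N) * En M (n+N) f x) \<in> L2 M"
    and "l2norm M (\<lambda>x. \<Sum>n. (1/2)^(n+N) * En M (n+N) f x) \<le> 2 * (1/2)^N * l2norm M f"
proof -
  let ?h = "\<lambda>n x. (1/2)^(n+N) * En M (n+N) f x"
  have h: "?h n \<in> L2 M" for n using f by (rule hE_L2)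
  have hn: "l2norm M (?h n) \<le> (1/2)^(n+N) * l2norm M f" for n using hE_norm[OF f] .
  have S: "summable (\<lambda>n. l2norm M (?h n))"
    by (rule summable_comparison_test[OF _ geo_summ[of N "l2norm M f"]]) (use hn l2norm_nonneg in auto)
  show "AE x in M. summable (\<lambda>n. \<bar>?h n x\<bar>)" using L2_series(1)[OF h S] .
  show "(\<lambda>x. \<Sum>n. ?h n x) \<in> L2 M" using L2_series(2)[OF h S] .
  have "l2norm M (\<lambda>x. \<Sum>n. ?h n x) \<le> (\<Sum>n. l2norm M (?h n))" using L2_series(3)[OF h S] .
  also have "\<dots> \<le> (\<Sum>n. (1/2)^(n+N) * l2norm M f)"
    by (rule suminf_le) (use hn S geo_summ in auto)
  also have "\<dots> = 2 * (1/2)^N * l2norm M f" by (rule geo_sum)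
  finally show "l2norm M (\<lambda>x. \<Sum>n. ?h n x) \<le> 2 * (1/2)^N * l2norm M f" .
qed

lemma K_props:
  assumes f: "f \<in> L2 M"
  shows "AE x in M. summable (\<lambda>n. \<bar>(1/2)^n * En M n f x\<bar>)"
    and "Kinf M f \<in> L2 M"
    and "l2norm M (Kinf M f) \<le> 2 * l2norm M f"
  using tail_series[OF f, of 0] by (simp_all add: Kinf_def[abs_def])

lemma K_meas[measurable]: "Kinf M f \<in> borel_measurable M"
  unfolding Kinf_def[abs_def] by measurable

lemma TN_meas[measurable]: "TN M N f \<in> borel_measurable M"
  unfolding TN_def[abs_def] by measurable

lemma TN_L2: "f \<in> L2 M \<Longrightarrow> TN M N f \<in> L2 M"
  unfolding TN_def[abs_def] by (intro L2_sum hE_L2) auto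

lemma K_tail:
  assumes f: "f \<in> L2 M"
  shows "(\<lambda>x. Kinf M f x - TN M N f x) \<in> L2 M"
    and "l2norm M (\<lambda>x. Kinf M f x - TN M N f x) \<le> 2 * (1/2)^N * l2norm M f"
proof -
  show "(\<lambda>x. Kinf M f x - TN M N f x) \<in> L2 M" using K_props(2)[OF f] TN_L2[OF f] by (rule L2_diff)
  have "AE x in M. Kinf M f x - TN M N f x = (\<Sum>n. (1/2)^(n+N) * En M (n+N) f x)"
    using K_props(1)[OF f]
  proof eventually_elim
    case (elim x)
    then have "summable (\<lambda>n. (1/2)^n * En M n f x)" by (rule summable_rabs_cancel)
    then show ?case unfolding Kinf_def TN_def by (subst suminf_split_initial_segment[of _ N]) auto
  qed
  then have "l2norm M (\<lambda>x. Kinf M f x - TN M N f x) = l2norm M (\<lambda>x. \<Sum>n. (1/2)^(n+N) * En M (n+N) f x)"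
    by (intro l2norm_cong) auto
  then show "l2norm M (\<lambda>x. Kinf M f x - TN M N f x) \<le> 2 * (1/2)^N * l2norm M f"
    using tail_series(3)[OF f, of N] by simp
qed

lemma lin_op_K: "lin_op M (Kinf M)"
  unfolding lin_op_def
proof (intro conjI ballI allI impI)
  fix f assume "f \<in> L2 M" then show "Kinf M f \<in> L2 M" by (rule K_props)
next
  fix f g a b assume f: "f \<in> L2 M" and g: "g \<in> L2 M"
  have "AE x in M. \<forall>n. En M n (\<lambda>y. a * f y + b * g y) x = a * En M n f x + b * En M n g x"
    unfolding AE_all_countable using E_lin[OF f g] by auto
  then show "AE x in M. Kinf M (\<lambda>y. a * f y + b * g y) x = a * Kinf M f x + b * Kinf M g x"
    using K_props(1)[OF f] K_props(1)[OF g]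
  proof eventually_elim
    case (elim x)
    have sf: "summable (\<lambda>n. (1/2)^n * En M n f x)" using elim(2) by (rule summable_rabs_cancel)
    have sg: "summable (\<lambda>n. (1/2)^n * En M n g x)" using elim(3) by (rule summable_rabs_cancel)
    have "Kinf M (\<lambda>y. a * f y + b * g y) x = (\<Sum>n. a * ((1/2)^n * En M n f x) + b * ((1/2)^n * En M n g x))"
      unfolding Kinf_def using elim(1) by (simp add: algebra_simps)
    also have "\<dots> = (\<Sum>n. a * ((1/2)^n * En M n f x)) + (\<Sum>n. b * ((1/2)^n * En M n g x))"
      using sf sg by (intro suminf_add[symmetric] summable_mult)
    also have "\<dots> = a * Kinf M f x + b * Kinf M g x"
      unfolding Kinf_def using sf sg by (simp add: suminf_mult)
    finally show ?case .
  qed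
next
  fix f g assume f: "f \<in> L2 M" and g: "g \<in> L2 M" and ae: "AE x in M. f x = g x"
  have "AE x in M. \<forall>n. En M n f x = En M n g x"
    unfolding AE_all_countable using E_cong ae f g by auto
  then show "AE x in M. Kinf M f x = Kinf M g x"
    by eventually_elim (simp add: Kinf_def)
qed

lemma lin_op_TN: "lin_op M (TN M N)"
  unfolding lin_op_def
proof (intro conjI ballI allI impI)
  fix f assume "f \<in> L2 M" then show "TN M N f \<in> L2 M" by (rule TN_L2)
next
  fix f g a b assume f: "f \<in> L2 M" and g: "g \<in> L2 M"
  have "AE x in M. \<forall>n. En M n (\<lambda>y. a * f y + b * g y) x = a * En M n f x + b * En M n g x"
    unfolding AE_all_countable using E_lin[OF f g] by auto
  then show "AE x in M. TN M N (\<lambda>y. a * f y + b * g y) x = a * TN M N f x + b * TN M N g x"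
    by eventually_elim (simp add: TN_def algebra_simps sum.distrib sum_distrib_left)
next
  fix f g assume f: "f \<in> L2 M" and g: "g \<in> L2 M" and ae: "AE x in M. f x = g x"
  have "AE x in M. \<forall>n. En M n f x = En M n g x"
    unfolding AE_all_countable using E_cong ae f g by auto
  then show "AE x in M. TN M N f x = TN M N g x"
    by eventually_elim (simp add: TN_def)
qed

definition cf :: "(real \<Rightarrow> real) \<Rightarrow> nat list \<Rightarrow> real" where
  "cf f w = (1/2)^length w * En M (length w) f (pt w)"

lemma TN_repr:
  "AE x in M. TN M N f x = (\<Sum>w\<in>WN N. cf f w * indicator (Cw w) x)"
proof -
  have "AE x in M. \<forall>n. En M n f x = (\<Sum>w\<in>words n. En M n f (pt w) * indicator (Cw w) x)"
    unfolding AE_all_countable using Fn_repr E_measF by blast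
  then show ?thesis
  proof eventually_elim
    case (elim x)
    have "TN M N f x = (\<Sum>n<N. \<Sum>w\<in>words n. cf f w * indicator (Cw w) x)"
      unfolding TN_def using elim
      by (intro sum.cong refl) (auto simp: sum_distrib_left cf_def words_def mult_ac intro!: sum.cong)
    also have "\<dots> = (\<Sum>w\<in>WN N. cf f w * indicator (Cw w) x)"
      unfolding WN_def
    proof (rule sum.UNION_disjoint[symmetric])
      show "\<forall>i\<in>{..<N}. \<forall>j\<in>{..<N}. i \<noteq> j \<longrightarrow> words i \<inter> words j = {}"
        by (auto simp: words_def)
    qed (auto simp: finite_words)
    finally show ?case .
  qed
qed

lemma rank_from_repr:
  assumes F: "lin_op M F" and W: "finite W" "card W \<le> k"
    and phi: "\<And>w. w \<in> W \<Longrightarrow> \<phi> w \<in> L2 M"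
    and rep: "\<And>f. f \<in> L2 M \<Longrightarrow> \<exists>c. AE x in M. F f x = (\<Sum>w\<in>W. c w * \<phi> w x)"
  shows "rank_le M k F"
proof -
  obtain e where e: "bij_betw e {0..<card W} W" using ex_bij_betw_nat_finite[OF W(1)] by blast
  define g where "g i = (if i < card W then \<phi> (e i) else (\<lambda>x. 0))" for i
  have eW: "e i \<in> W" if "i < card W" for i using bij_betw_apply[OF e] that by auto
  have gL2: "g i \<in> L2 M" for i
    using phi eW L2_zero unfolding g_def by auto
  have "\<exists>c'. AE x in M. F f x = (\<Sum>i<k. c' i * g i x)" if f: "f \<in> L2 M" for f
  proof -
    obtain c where c: "AE x in M. F f x = (\<Sum>w\<in>W. c w * \<phi> w x)" using rep[OF f] by blast
    define c' where "c' i = (if i < card W then c (e i) else 0)" for i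
    have "(\<Sum>i<k. c' i * g i x) = (\<Sum>w\<in>W. c w * \<phi> w x)" for x
    proof -
      have "(\<Sum>i<k. c' i * g i x) = (\<Sum>i\<in>{0..<card W}. c' i * g i x)"
        using W(2) by (intro sum.mono_neutral_right) (auto simp: c'_def g_def)
      also have "\<dots> = (\<Sum>i\<in>{0..<card W}. c (e i) * \<phi> (e i) x)"
        by (intro sum.cong) (auto simp: c'_def g_def)
      also have "\<dots> = (\<Sum>w\<in>W. c w * \<phi> w x)"
        by (rule sum.reindex_bij_betw[OF e, of "\<lambda>w. c w * \<phi> w x"])
      finally show ?thesis .
    qed
    then have "AE x in M. F f x = (\<Sum>i<k. c' i * g i x)" using c by simp
    then show ?thesis by blast
  qed
  then show ?thesis unfolding rank_le_def using F gL2 by blast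
qed

lemma rank_TN:
  assumes "2^N \<le> k + 1"
  shows "rank_le M k (TN M N)"
proof (rule rank_from_repr[OF lin_op_TN finite_WN])
  show "card (WN N) \<le> k" using card_WN[of N] assms by linarith
  show "\<And>w. w \<in> WN N \<Longrightarrow> indicator (Cw w) \<in> L2 M"
    using WN_words Cw_words_sets L2_indicator by blast
  show "\<exists>c. AE x in M. TN M N f x = (\<Sum>w\<in>WN N. c w * indicator (Cw w) x)" for f
    using TN_repr by blast
qed

lemma opnorm_le:
  assumes "\<And>f. f \<in> L2 M \<Longrightarrow> l2norm M f \<le> 1 \<Longrightarrow> T f \<in> L2 M \<and> l2norm M (T f) \<le> c"
  shows "opnorm M T \<le> ereal c"
  unfolding opnorm_def using assms by (intro SUP_least) auto

lemma opnorm_ge: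
  assumes "f \<in> L2 M" "l2norm M f \<le> 1" "T f \<in> L2 M" "c \<le> l2norm M (T f)"
  shows "ereal c \<le> opnorm M T"
  unfolding opnorm_def using assms by (intro SUP_upper2[of f]) auto

lemma sing_val_le: "rank_le M k F \<Longrightarrow> sing_val M T k \<le> opnorm M (\<lambda>f x. T f x - F f x)"
  unfolding sing_val_def by (intro INF_lower) auto

lemma sing_val_ge:
  "(\<And>F. rank_le M k F \<Longrightarrow> ereal c \<le> opnorm M (\<lambda>f x. T f x - F f x)) \<Longrightarrow> ereal c \<le> sing_val M T k"
  unfolding sing_val_def by (intro INF_greatest) auto

lemma sv_upper:
  assumes "2^N \<le> k + 1"
  shows "sing_val M (Kinf M) k \<le> ereal (2 * (1/2)^N)"
proof -
  have "sing_val M (Kinf M) k \<le> opnorm M (\<lambda>f x. Kinf M f x - TN M N f x)"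
    by (rule sing_val_le[OF rank_TN[OF assms]])
  also have "\<dots> \<le> ereal (2 * (1/2)^N)"
  proof (rule opnorm_le)
    fix f assume f: "f \<in> L2 M" "l2norm M f \<le> 1"
    have "l2norm M (\<lambda>x. Kinf M f x - TN M N f x) \<le> 2 * (1/2)^N * l2norm M f" by (rule K_tail(2)[OF f(1)])
    also have "\<dots> \<le> 2 * (1/2)^N * 1" using f(2) by (intro mult_left_mono) auto
    finally show "(\<lambda>x. Kinf M f x - TN M N f x) \<in> L2 M \<and> l2norm M (\<lambda>x. Kinf M f x - TN M N f x) \<le> 2 * (1/2)^N"
      using K_tail(1)[OF f(1)] by simp
  qed
  finally show ?thesis .
qed

lemma sv_le2: "sing_val M (Kinf M) k \<le> ereal 2"
  using sv_upper[of 0 k] by simp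

end

lemma lin_dep:
  fixes c :: "'a \<Rightarrow> nat \<Rightarrow> real"
  assumes "finite W" "k < card W"
  shows "\<exists>l. (\<exists>w\<in>W. l w \<noteq> 0) \<and> (\<forall>i<k. (\<Sum>w\<in>W. l w * c w i) = 0)"
  using assms
proof (induction k arbitrary: W c)
  case 0
  then obtain w0 where "w0 \<in> W" by fastforce
  then show ?case by (intro exI[of _ "\<lambda>w. if w = w0 then 1 else 0"]) auto
next
  case (Suc k)
  show ?case
  proof (cases "\<forall>w\<in>W. c w k = 0")
    case True
    obtain l where l: "\<exists>w\<in>W. l w \<noteq> 0" "\<forall>i<k. (\<Sum>w\<in>W. l w * c w i) = 0"
      using Suc.IH[of W c] Suc.prems by auto
    have "\<forall>i<Suc k. (\<Sum>w\<in>W. l w * c w i) = 0"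
    proof (intro allI impI)
      fix i assume "i < Suc k"
      then consider "i < k" | "i = k" by linarith
      then show "(\<Sum>w\<in>W. l w * c w i) = 0"
        by cases (use l True in auto)
    qed
    then show ?thesis using l by blast
  next
    case False
    then obtain w0 where w0: "w0 \<in> W" "c w0 k \<noteq> 0" by blast
    define W' where "W' = W - {w0}"
    define c' where "c' w i = c w i - (c w k / c w0 k) * c w0 i" for w i
    have fW': "finite W'" using Suc.prems unfolding W'_def by simp
    have cW': "k < card W'" using Suc.prems w0 unfolding W'_def by (simp add: card_Diff_singleton)
    obtain l' where l': "\<exists>w\<in>W'. l' w \<noteq> 0" "\<forall>i<k. (\<Sum>w\<in>W'. l' w * c' w i) = 0"
      using Suc.IH[OF fW' cW', of c'] by blast
    define S where "S i = (\<Sum>w\<in>W'. l' w * c w i)" for i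
    define mu where "mu = - S k / c w0 k"
    define l where "l w = (if w = w0 then mu else l' w)" for w
    have key: "(\<Sum>w\<in>W. l w * c w i) = mu * c w0 i + S i" for i
    proof -
      have "(\<Sum>w\<in>W. l w * c w i) = l w0 * c w0 i + (\<Sum>w\<in>W'. l w * c w i)"
        unfolding W'_def by (rule sum.remove[OF Suc.prems(1) w0(1)])
      also have "(\<Sum>w\<in>W'. l w * c w i) = S i"
        unfolding S_def by (intro sum.cong) (auto simp: l_def W'_def)
      finally show ?thesis by (simp add: l_def)
    qed
    have Sc': "(\<Sum>w\<in>W'. l' w * c' w i) = S i - (c w0 i / c w0 k) * S k" for i
    proof -
      have "(\<Sum>w\<in>W'. l' w * c' w i) = (\<Sum>w\<in>W'. l' w * c w i - (c w0 i / c w0 k) * (l' w * c w k))"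
        unfolding c'_def by (intro sum.cong) (auto simp: algebra_simps)
      also have "\<dots> = S i - (c w0 i / c w0 k) * S k"
        unfolding S_def by (simp add: sum_subtractf sum_distrib_left)
      finally show ?thesis .
    qed
    have "\<forall>i<Suc k. (\<Sum>w\<in>W. l w * c w i) = 0"
    proof (intro allI impI)
      fix i assume "i < Suc k"
      then consider "i < k" | "i = k" by linarith
      then show "(\<Sum>w\<in>W. l w * c w i) = 0"
      proof cases
        case 1
        then have "S i = (c w0 i / c w0 k) * S k" using l'(2) Sc' by auto
        then show ?thesis using key[of i] w0 by (simp add: mu_def field_simps)
      next
        case 2
        then show ?thesis using key[of i] w0 by (simp add: mu_def field_simps)
      qed
    qed
    moreover have "\<exists>w\<in>W. l w \<noteq> 0" using l' unfolding l_def W'_def by auto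
    ultimately show ?thesis by blast
  qed
qed

context CM
begin

lemma lin_op_lin:
  assumes "lin_op M F" "f \<in> L2 M" "g \<in> L2 M"
  shows "AE x in M. F (\<lambda>y. a * f y + b * g y) x = a * F f x + b * F g x"
  using assms unfolding lin_op_def by blast

lemma lin_zero:
  assumes "lin_op M F"
  shows "AE x in M. F (\<lambda>y. 0) x = 0"
proof -
  have "AE x in M. F (\<lambda>y. 0 * 0 + 0 * 0) x = 0 * F (\<lambda>y. 0) x + 0 * F (\<lambda>y. 0) x"
    by (rule lin_op_lin[OF assms L2_zero L2_zero])
  then show ?thesis by simp
qed

lemma lin_scale:
  assumes "lin_op M F" "f \<in> L2 M"
  shows "AE x in M. F (\<lambda>y. a * f y) x = a * F f x"
proof -
  have "AE x in M. F (\<lambda>y. a * f y + 0 * f y) x = a * F f x + 0 * F f x"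
    by (rule lin_op_lin[OF assms assms(2)])
  then show ?thesis by simp
qed

lemma lin_sum:
  assumes F: "lin_op M F"
  shows "finite I \<Longrightarrow> (\<And>i. i \<in> I \<Longrightarrow> \<phi> i \<in> L2 M) \<Longrightarrow>
    AE x in M. F (\<lambda>y. \<Sum>i\<in>I. a i * \<phi> i y) x = (\<Sum>i\<in>I. a i * F (\<phi> i) x)"
proof (induction I rule: finite_induct)
  case empty then show ?case using lin_zero[OF F] by simp
next
  case (insert j I)
  have L: "(\<lambda>y. \<Sum>i\<in>I. a i * \<phi> i y) \<in> L2 M" using insert by (intro L2_sum L2_cmult) auto
  have "AE x in M. F (\<lambda>y. a j * \<phi> j y + 1 * (\<Sum>i\<in>I. a i * \<phi> i y)) x
      = a j * F (\<phi> j) x + 1 * F (\<lambda>y. \<Sum>i\<in>I. a i * \<phi> i y) x"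
    by (rule lin_op_lin[OF F insert.prems[of j] L]) simp
  moreover have "AE x in M. F (\<lambda>y. \<Sum>i\<in>I. a i * \<phi> i y) x = (\<Sum>i\<in>I. a i * F (\<phi> i) x)"
    using insert.IH insert.prems by auto
  ultimately show ?case by eventually_elim (simp add: insert.hyps)
qed

lemma K_inner:
  assumes u: "u \<in> L2 M" "l2norm M u = 1" and self: "AE x in M. En M N u x = u x"
  shows "(1/2)^N \<le> (\<integral>x. Kinf M u x * u x \<partial>M)"
proof -
  define f where "f n x = (1/2)^n * En M n u x * u x" for n x
  have fi: "integrable M (f n)" for n
    unfolding f_def using L2_prod[OF hE_L2[OF u(1)] u(1)] by simp
  have ae: "AE x in M. summable (\<lambda>n. norm (f n x))"
    using K_props(1)[OF u(1)]
  proof eventually_elim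
    case (elim x)
    then have "summable (\<lambda>n. \<bar>(1/2)^n * En M n u x\<bar> * \<bar>u x\<bar>)" by (rule summable_mult2)
    then show ?case by (simp add: f_def abs_mult)
  qed
  have nb: "(\<integral>x. norm (f n x) \<partial>M) \<le> (1/2)^n" for n
  proof -
    let ?h = "\<lambda>x. (1/2)^n * En M n u x"
    have hL: "?h \<in> L2 M" by (rule hE_L2[OF u(1)])
    have "(\<integral>x. norm (f n x) \<partial>M) = (\<integral>x. \<bar>?h x\<bar> * \<bar>u x\<bar> \<partial>M)"
      by (simp add: f_def abs_mult)
    also have "\<dots> \<le> \<bar>\<integral>x. \<bar>?h x\<bar> * \<bar>u x\<bar> \<partial>M\<bar>" by simp
    also have "\<dots> \<le> l2norm M (\<lambda>x. \<bar>?h x\<bar>) * l2norm M (\<lambda>x. \<bar>u x\<bar>)"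
      by (rule CS[OF L2_abs[OF hL] L2_abs[OF u(1)]])
    also have "\<dots> = l2norm M ?h" by (simp only: l2norm_abs u(2))
    also have "\<dots> \<le> (1/2)^n * l2norm M u" by (rule hE_norm[OF u(1)])
    finally show ?thesis using u(2) by simp
  qed
  have sn: "summable (\<lambda>n. (\<integral>x. norm (f n x) \<partial>M))"
    by (rule summable_comparison_test[OF _ summable_geometric[of "1/2::real"]]) (use nb in auto)
  have I: "(\<integral>x. (\<Sum>n. f n x) \<partial>M) = (\<Sum>n. (\<integral>x. f n x \<partial>M))"
    by (rule integral_suminf[OF fi ae sn])
  have S: "summable (\<lambda>n. (\<integral>x. f n x \<partial>M))"
    by (rule summable_integral[OF fi ae sn])
  have um[measurable]: "u \<in> borel_measurable M" using u(1) by (rule L2_meas)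
  have aeK: "AE x in M. Kinf M u x * u x = (\<Sum>n. f n x)"
    using K_props(1)[OF u(1)]
  proof eventually_elim
    case (elim x)
    then have "summable (\<lambda>n. (1/2)^n * En M n u x)" by (rule summable_rabs_cancel)
    then show ?case unfolding Kinf_def f_def by (rule suminf_mult2)
  qed
  have fm: "(\<lambda>x. \<Sum>n. f n x) \<in> borel_measurable M" unfolding f_def by measurable
  have "(\<integral>x. Kinf M u x * u x \<partial>M) = (\<integral>x. (\<Sum>n. f n x) \<partial>M)"
    by (rule integral_cong_AE[OF _ fm aeK]) measurable
  then have eq: "(\<integral>x. Kinf M u x * u x \<partial>M) = (\<Sum>n. (\<integral>x. f n x \<partial>M))"
    using I by simp
  have nonneg: "0 \<le> (\<integral>x. f n x \<partial>M)" for n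
  proof -
    have "(\<integral>x. f n x \<partial>M) = (1/2)^n * (\<integral>x. En M n u x * u x \<partial>M)"
      unfolding f_def by (simp add: mult.assoc)
    also have "\<dots> = (1/2)^n * (\<integral>x. (En M n u x)^2 \<partial>M)" by (simp add: E_inner[OF u(1)])
    finally show ?thesis by simp
  qed
  have fN: "(\<integral>x. f N x \<partial>M) = (1/2)^N"
  proof -
    have "(\<integral>x. f N x \<partial>M) = (1/2)^N * (\<integral>x. En M N u x * u x \<partial>M)"
      unfolding f_def by (simp add: mult.assoc)
    also have "(\<integral>x. En M N u x * u x \<partial>M) = (\<integral>x. (u x)^2 \<partial>M)"
      using self by (intro integral_cong_AE) (auto simp: L2_meas[OF u(1)] power2_eq_square)
    also have "\<dots> = 1" using l2norm_sq[of u] u(2) by simp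
    finally show ?thesis by simp
  qed
  have "(\<Sum>n\<in>{N}. (\<integral>x. f n x \<partial>M)) \<le> (\<Sum>n. (\<integral>x. f n x \<partial>M))"
    by (rule sum_le_suminf[OF S]) (use nonneg in auto)
  then show ?thesis using eq fN by simp
qed

lemma sv_lower:
  assumes kN: "k < 2^N"
  shows "ereal ((1/2)^N) \<le> sing_val M (Kinf M) k"
proof (rule sing_val_ge)
  fix F assume "rank_le M k F"
  then obtain g where lin: "lin_op M F" and g: "\<forall>i<k. g i \<in> L2 M"
    and rep: "\<forall>f\<in>L2 M. \<exists>c. AE x in M. F f x = (\<Sum>i<k. c i * g i x)"
    unfolding rank_le_def by blast
  let ?W = "words N"
  have "\<forall>w\<in>?W. \<exists>c. AE x in M. F (indicator (Cw w)) x = (\<Sum>i<k. c i * g i x)"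
    using rep L2_indicator Cw_words_sets by blast
  then obtain C where C: "\<And>w. w \<in> ?W \<Longrightarrow> AE x in M. F (indicator (Cw w)) x = (\<Sum>i<k. C w i * g i x)"
    by metis
  obtain l where l: "\<exists>w\<in>?W. l w \<noteq> 0" "\<forall>i<k. (\<Sum>w\<in>?W. l w * C w i) = 0"
    using lin_dep[OF finite_words, of k N C] kN by (auto simp: card_words)
  define v where "v x = (\<Sum>w\<in>?W. l w * indicator (Cw w) x)" for x
  have vL2: "v \<in> L2 M" unfolding v_def[abs_def] by (rule step_L2)
  have vF: "v \<in> borel_measurable (Fn M N)" unfolding v_def[abs_def] by (rule step_measF)
  have Fv: "AE x in M. F v x = 0"
  proof -
    have "AE x in M. F v x = (\<Sum>w\<in>?W. l w * F (indicator (Cw w)) x)"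
      unfolding v_def[abs_def] by (rule lin_sum[OF lin finite_words]) (use L2_indicator Cw_words_sets in auto)
    moreover have "AE x in M. \<forall>w\<in>?W. F (indicator (Cw w)) x = (\<Sum>i<k. C w i * g i x)"
      using C by (intro AE_finite_allI[OF finite_words]) auto
    ultimately show ?thesis
    proof eventually_elim
      case (elim x)
      have "F v x = (\<Sum>w\<in>?W. l w * (\<Sum>i<k. C w i * g i x))" using elim by simp
      also have "\<dots> = (\<Sum>i<k. (\<Sum>w\<in>?W. l w * C w i) * g i x)"
        by (simp add: sum_distrib_left sum_distrib_right mult_ac sum.swap[of _ ?W])
      also have "\<dots> = 0" using l(2) by simp
      finally show ?case .
    qed
  qed
  have pos: "(\<Sum>w\<in>?W. (l w)^2) > 0"
  proof -
    obtain w0 where "w0 \<in> ?W" "l w0 \<noteq> 0" using l(1) by blast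
    then show ?thesis by (intro sum_pos2[of _ w0]) (auto simp: finite_words)
  qed
  have "(l2norm M v)^2 = (\<Sum>w\<in>?W. (l w)^2) * (1/2)^N"
    unfolding l2norm_sq v_def by (rule step_int_sq)
  then have "(l2norm M v)^2 > 0" using pos by simp
  then have nv: "l2norm M v > 0" using l2norm_nonneg[of v] by (cases "l2norm M v = 0") auto
  define a where "a = 1 / l2norm M v"
  define u where "u x = a * v x" for x
  have uL2: "u \<in> L2 M" unfolding u_def[abs_def] by (rule L2_cmult[OF vL2])
  have "l2norm M u = \<bar>a\<bar> * l2norm M v" unfolding u_def[abs_def] by (rule l2norm_cmult)
  then have nu: "l2norm M u = 1" using nv by (simp add: a_def)
  have uF: "u \<in> borel_measurable (Fn M N)" unfolding u_def[abs_def] using vF by measurable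
  have self: "AE x in M. En M N u x = u x" by (rule E_self[OF uL2 uF])
  have Fu: "AE x in M. F u x = 0"
    using lin_scale[OF lin vL2, of a] Fv unfolding u_def[abs_def] by eventually_elim simp
  have Ku: "(1/2)^N \<le> (\<integral>x. Kinf M u x * u x \<partial>M)" by (rule K_inner[OF uL2 nu self])
  define r where "r x = Kinf M u x - F u x" for x
  have FuL2: "F u \<in> L2 M" using lin uL2 unfolding lin_op_def by blast
  have [measurable]: "F u \<in> borel_measurable M" "u \<in> borel_measurable M"
    using FuL2 uL2 by (auto intro: L2_meas)
  have rL2: "r \<in> L2 M" unfolding r_def[abs_def] by (rule L2_diff[OF K_props(2)[OF uL2] FuL2])
  have "(\<integral>x. r x * u x \<partial>M) = (\<integral>x. Kinf M u x * u x \<partial>M)"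
  proof (rule integral_cong_AE)
    show "AE x in M. r x * u x = Kinf M u x * u x" using Fu by eventually_elim (simp add: r_def)
  qed (simp_all add: r_def[abs_def])
  then have "(1/2)^N \<le> (\<integral>x. r x * u x \<partial>M)" using Ku by simp
  also have "\<dots> \<le> \<bar>\<integral>x. r x * u x \<partial>M\<bar>" by simp
  also have "\<dots> \<le> l2norm M r * l2norm M u" by (rule CS[OF rL2 uL2])
  finally have "(1/2)^N \<le> l2norm M r" using nu by simp
  then show "ereal ((1/2)^N) \<le> opnorm M (\<lambda>f x. Kinf M f x - F f x)"
    using rL2 uL2 nu unfolding r_def[abs_def] by (intro opnorm_ge[of u]) auto
qed

end

context CM
begin

lemma l2norm_ind_le: assumes "A \<in> sets M" shows "l2norm M (indicator A) \<le> 1"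
proof -
  have "(\<integral>x. (indicator A x :: real)^2 \<partial>M) \<le> (\<integral>x. 1 \<partial>M)"
    by (rule integral_mono[OF L2_sq[OF L2_indicator[OF assms]]]) (auto simp: indicator_def)
  also have "\<dots> = 1" by (simp add: prob_space)
  finally show ?thesis unfolding l2norm_def by simp
qed

lemma cf_bound:
  assumes f: "f \<in> L2 M" "l2norm M f \<le> 1" and w: "w \<in> words n"
  shows "\<bar>cf f w\<bar> \<le> 1"
proof -
  have len: "length w = n" using w by (simp add: words_def)
  have "AE x in M. En M n f x = (\<Sum>v\<in>words n. En M n f (pt v) * indicator (Cw v) x)"
    by (rule Fn_repr[OF E_measF])
  then have "(\<integral>x. (En M n f x)^2 \<partial>M) = (\<integral>x. (\<Sum>v\<in>words n. En M n f (pt v) * indicator (Cw v) x)^2 \<partial>M)"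
    by (intro integral_cong_AE) (auto intro!: step_meas)
  also have "\<dots> = (\<Sum>v\<in>words n. (En M n f (pt v))^2) * (1/2)^n" by (rule step_int_sq)
  finally have eq: "(\<integral>x. (En M n f x)^2 \<partial>M) = (\<Sum>v\<in>words n. (En M n f (pt v))^2) * (1/2)^n" .
  have "(En M n f (pt w))^2 * (1/2)^n \<le> (\<Sum>v\<in>words n. (En M n f (pt v))^2) * (1/2)^n"
    by (intro mult_right_mono member_le_sum w finite_words) auto
  also have "\<dots> = (l2norm M (En M n f))^2" using eq by (simp add: l2norm_sq)
  also have "\<dots> \<le> 1"
  proof -
    have "l2norm M (En M n f) \<le> 1" using E_L2(2)[OF f(1), of n] f(2) by simp
    then show ?thesis using l2norm_nonneg[of "En M n f"] by (simp add: abs_square_le_1)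
  qed
  finally have e1: "(En M n f (pt w))^2 * (1/2)^n \<le> 1" .
  have "(cf f w)^2 = (En M n f (pt w))^2 * (1/2)^n * (1/2)^n"
    by (simp add: cf_def len power_mult_distrib power2_eq_square)
  also have "\<dots> \<le> 1 * 1"
    by (intro mult_mono e1) (auto simp: power_le_one)
  finally show ?thesis by (simp add: abs_square_le_1)
qed

lemma TN_diff_norm:
  assumes f: "f \<in> L2 M" and g: "g \<in> L2 M"
  shows "l2norm M (\<lambda>x. TN M N f x - TN M N g x) \<le> (\<Sum>w\<in>WN N. \<bar>cf f w - cf g w\<bar>)"
proof -
  have "AE x in M. TN M N f x - TN M N g x = (\<Sum>w\<in>WN N. (cf f w - cf g w) * indicator (Cw w) x)"
    using TN_repr[of N f] TN_repr[of N g] by eventually_elim (simp add: sum_subtractf left_diff_distrib)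
  moreover have "(\<lambda>x. \<Sum>w\<in>WN N. (cf f w - cf g w) * indicator (Cw w) x) \<in> borel_measurable M"
  proof (rule borel_measurable_sum)
    fix w assume "w \<in> WN N"
    then have [measurable]: "Cw w \<in> sets M" using WN_words Cw_words_sets by blast
    show "(\<lambda>x. (cf f w - cf g w) * indicator (Cw w) x) \<in> borel_measurable M" by measurable
  qed
  ultimately have "l2norm M (\<lambda>x. TN M N f x - TN M N g x) = l2norm M (\<lambda>x. \<Sum>w\<in>WN N. (cf f w - cf g w) * indicator (Cw w) x)"
    by (intro l2norm_cong) auto
  also have "\<dots> \<le> (\<Sum>w\<in>WN N. l2norm M (\<lambda>x. (cf f w - cf g w) * indicator (Cw w) x))"
    by (rule l2norm_sum[OF finite_WN]) (use WN_words Cw_words_sets in \<open>blast intro: L2_cmult L2_indicator\<close>)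
  also have "\<dots> \<le> (\<Sum>w\<in>WN N. \<bar>cf f w - cf g w\<bar>)"
  proof (rule sum_mono)
    fix w assume "w \<in> WN N"
    then have "Cw w \<in> sets M" using WN_words Cw_words_sets by blast
    then have "l2norm M (indicator (Cw w)) \<le> 1" by (rule l2norm_ind_le)
    then show "l2norm M (\<lambda>x. (cf f w - cf g w) * indicator (Cw w) x) \<le> \<bar>cf f w - cf g w\<bar>"
      by (simp add: l2norm_cmult mult_left_le)
  qed
  finally show ?thesis .
qed

lemma compact_K: "compact_op M (Kinf M)"
  unfolding compact_op_def
proof (intro allI impI)
  fix fs :: "nat \<Rightarrow> real \<Rightarrow> real"
  assume fs: "\<forall>k. fs k \<in> L2 M \<and> l2norm M (fs k) \<le> 1"
  define a where "a k w = (if w \<in> words (length w) then cf (fs k) w else 0)" for k w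
  have abound: "\<bar>a k w\<bar> \<le> 1" for k w
    unfolding a_def using cf_bound fs by auto
  define P where "P j s = convergent (\<lambda>m. a (s m) (from_nat j :: nat list))" for j and s :: "nat \<Rightarrow> nat"
  interpret ss: subseqs P
  proof
    fix j and s :: "nat \<Rightarrow> nat" assume "strict_mono s"
    have "bounded (range (\<lambda>m. a (s m) (from_nat j)))"
      using abound by (intro boundedI[where B=1]) auto
    then obtain l r where "strict_mono r" "((\<lambda>m. a (s m) (from_nat j)) \<circ> r) \<longlonglongrightarrow> l"
      using bounded_imp_convergent_subsequence by blast
    then show "\<exists>r'. strict_mono r' \<and> P j (s \<circ> r')"
      unfolding P_def by (intro exI[of _ r]) (auto simp: convergent_def o_def)
  qed
  define \<phi> where "\<phi> = ss.diagseq"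
  have smono: "strict_mono \<phi>" unfolding \<phi>_def by (rule ss.subseq_diagseq)
  have conv: "convergent (\<lambda>m. a (\<phi> m) w)" for w
  proof -
    define j where "j = to_nat w"
    have "P j (ss.diagseq \<circ> (+) (Suc j))"
    proof (rule ss.diagseq_holds)
      fix r s n assume "strict_mono (r :: nat \<Rightarrow> nat)" "P n s"
      then show "P n (s \<circ> r)" unfolding P_def convergent_def
        using LIMSEQ_subseq_LIMSEQ[of "\<lambda>m. a (s m) (from_nat n)"] by (auto simp: o_def)
    qed
    then obtain L where "(\<lambda>m. a (\<phi> (Suc j + m)) w) \<longlonglongrightarrow> L"
      unfolding P_def convergent_def j_def \<phi>_def by (auto simp: o_def)
    then have "(\<lambda>m. a (\<phi> (m + Suc j)) w) \<longlonglongrightarrow> L" by (simp add: add.commute)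
    then have "(\<lambda>m. a (\<phi> m) w) \<longlonglongrightarrow> L" by (rule LIMSEQ_offset)
    then show ?thesis by (auto simp: convergent_def)
  qed
  have "\<forall>e>0. \<exists>N. \<forall>m\<ge>N. \<forall>n\<ge>N. l2norm M (\<lambda>x. Kinf M (fs (\<phi> m)) x - Kinf M (fs (\<phi> n)) x) < e"
  proof (intro allI impI)
    fix e :: real assume e: "e > 0"
    obtain N where N: "(1/2::real)^N < e / 8" using real_arch_pow_inv[of "e/8" "1/2"] e by auto
    define W where "W = WN N"
    define d where "d = e / (2 * (real (card W) + 1))"
    have d: "d > 0" using e by (simp add: d_def add_pos_nonneg)
    have "\<forall>w\<in>W. \<exists>Mw. \<forall>m\<ge>Mw. \<forall>n\<ge>Mw. dist (a (\<phi> m) w) (a (\<phi> n) w) < d"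
    proof
      fix w assume "w \<in> W"
      have "Cauchy (\<lambda>m. a (\<phi> m) w)" using conv[of w] by (simp add: Cauchy_convergent_iff)
      then show "\<exists>Mw. \<forall>m\<ge>Mw. \<forall>n\<ge>Mw. dist (a (\<phi> m) w) (a (\<phi> n) w) < d"
        using d by (rule metric_CauchyD)
    qed
    then obtain Mw where Mw: "\<And>w m n. w \<in> W \<Longrightarrow> m \<ge> Mw w \<Longrightarrow> n \<ge> Mw w \<Longrightarrow> \<bar>a (\<phi> m) w - a (\<phi> n) w\<bar> < d"
      by (metis dist_real_def)
    define M0 where "M0 = (\<Sum>w\<in>W. Mw w)"
    have M0: "Mw w \<le> M0" if "w \<in> W" for w
      unfolding M0_def using that finite_WN W_def by (intro member_le_sum) auto
    show "\<exists>N. \<forall>m\<ge>N. \<forall>n\<ge>N. l2norm M (\<lambda>x. Kinf M (fs (\<phi> m)) x - Kinf M (fs (\<phi> n)) x) < e"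
    proof (intro exI[of _ M0] allI impI)
      fix m n assume m: "m \<ge> M0" and n: "n \<ge> M0"
      let ?p = "fs (\<phi> m)" and ?q = "fs (\<phi> n)"
      have p: "?p \<in> L2 M" "l2norm M ?p \<le> 1" and q: "?q \<in> L2 M" "l2norm M ?q \<le> 1" using fs by auto
      define D1 where "D1 x = Kinf M ?p x - TN M N ?p x" for x
      define D2 where "D2 x = TN M N ?p x - TN M N ?q x" for x
      define D3 where "D3 x = Kinf M ?q x - TN M N ?q x" for x
      have D1: "D1 \<in> L2 M" "l2norm M D1 \<le> 2 * (1/2)^N * 1"
        unfolding D1_def[abs_def] using K_tail[OF p(1), of N] p(2)
        by (auto intro: order_trans mult_left_mono)
      have D3: "D3 \<in> L2 M" "l2norm M D3 \<le> 2 * (1/2)^N * 1"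
        unfolding D3_def[abs_def] using K_tail[OF q(1), of N] q(2)
        by (auto intro: order_trans mult_left_mono)
      have D2L: "D2 \<in> L2 M" unfolding D2_def[abs_def] by (intro L2_diff TN_L2 p q)
      have "l2norm M D2 \<le> (\<Sum>w\<in>W. \<bar>cf ?p w - cf ?q w\<bar>)"
        unfolding D2_def[abs_def] W_def by (rule TN_diff_norm[OF p(1) q(1)])
      also have "\<dots> \<le> (\<Sum>w\<in>W. d)"
      proof (rule sum_mono)
        fix w assume w: "w \<in> W"
        then have "w \<in> words (length w)" unfolding W_def by (rule WN_words)
        then have "\<bar>cf ?p w - cf ?q w\<bar> = \<bar>a (\<phi> m) w - a (\<phi> n) w\<bar>" by (simp add: a_def)
        also have "\<dots> < d" using Mw[OF w] M0[OF w] m n by auto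
        finally show "\<bar>cf ?p w - cf ?q w\<bar> \<le> d" by simp
      qed
      also have "\<dots> = real (card W) * d" by simp
      also have "\<dots> < e / 2"
      proof -
        have "real (card W) * d = e / 2 * (real (card W) / (real (card W) + 1))"
          by (simp add: d_def field_simps)
        also have "\<dots> < e / 2 * 1" using e by (intro mult_strict_left_mono) auto
        finally show ?thesis by simp
      qed
      finally have D2n: "l2norm M D2 < e / 2" .
      have eqf: "(\<lambda>x. Kinf M ?p x - Kinf M ?q x) = (\<lambda>x. (D1 x + D2 x) - D3 x)"
        by (auto simp: D1_def D2_def D3_def)
      have "l2norm M (\<lambda>x. (D1 x + D2 x) - D3 x) \<le> l2norm M (\<lambda>x. D1 x + D2 x) + l2norm M D3"
        by (rule l2norm_diff[OF L2_add[OF D1(1) D2L] D3(1)])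
      also have "\<dots> \<le> (l2norm M D1 + l2norm M D2) + l2norm M D3"
        using l2norm_add[OF D1(1) D2L] by simp
      also have "\<dots> < e"
        using D1(2) D2n D3(2) N by simp
      finally show "l2norm M (\<lambda>x. Kinf M ?p x - Kinf M ?q x) < e" using eqf by simp
    qed
  qed
  then show "\<exists>\<phi>::nat\<Rightarrow>nat. strict_mono \<phi> \<and> (\<forall>e>0. \<exists>N. \<forall>m\<ge>N. \<forall>n\<ge>N. l2norm M (\<lambda>x. Kinf M (fs (\<phi> m)) x - Kinf M (fs (\<phi> n)) x) < e)"
    using smono by blast
qed

end

lemma ereal_bounds_real:
  fixes s :: ereal
  assumes "ereal a \<le> s" "s \<le> ereal b"
  shows "a \<le> real_of_ereal s" "real_of_ereal s \<le> b"
  using assms by (cases s; simp)+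

context CM
begin

lemma rs_pos: "0 < real_of_ereal (sing_val M (Kinf M) k)"
proof -
  have "k < 2^k" by (rule less_exp)
  then have "ereal ((1/2)^k) \<le> sing_val M (Kinf M) k" by (rule sv_lower)
  then have "(1/2)^k \<le> real_of_ereal (sing_val M (Kinf M) k)"
    using ereal_bounds_real(1) sv_le2 by blast
  moreover have "(0::real) < (1/2)^k" by simp
  ultimately show ?thesis by linarith
qed

lemma rs_upper: "real_of_ereal (sing_val M (Kinf M) k) \<le> 4 / real (Suc k)"
proof -
  obtain N where N: "2^N \<le> k + 1" "k + 1 < 2^(N+1)"
    using ex_power_ivl1[of 2 "k+1"] by auto
  have "sing_val M (Kinf M) k \<le> ereal (2 * (1/2)^N)" by (rule sv_upper[OF N(1)])
  moreover have "ereal ((1/2)^(Suc k)) \<le> sing_val M (Kinf M) k"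
    by (rule sv_lower) (use less_exp[of k] in \<open>simp, linarith\<close>)
  ultimately have "real_of_ereal (sing_val M (Kinf M) k) \<le> 2 * (1/2)^N"
    using ereal_bounds_real(2) by blast
  also have "\<dots> \<le> 4 / real (Suc k)"
  proof -
    have "real (k + 1) < 2^(N+1)" using N(2) by (metis of_nat_less_iff of_nat_numeral of_nat_power)
    then have "real (Suc k) \<le> 2 * 2^N" by simp
    then show ?thesis by (simp add: field_simps power_divide)
  qed
  finally show ?thesis .
qed

lemma rs_lower: "1 / (2 * real (Suc k)) \<le> real_of_ereal (sing_val M (Kinf M) k)"
proof -
  obtain N where N: "2^N \<le> k + 1" "k + 1 < 2^(N+1)"
    using ex_power_ivl1[of 2 "k+1"] by auto
  have "ereal ((1/2)^(N+1)) \<le> sing_val M (Kinf M) k" by (rule sv_lower) (use N(2) in simp)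
  then have "(1/2)^(N+1) \<le> real_of_ereal (sing_val M (Kinf M) k)"
    using ereal_bounds_real(1) sv_le2 by blast
  moreover have "1 / (2 * real (Suc k)) \<le> (1/2)^(N+1)"
  proof -
    have "real (2^N) \<le> real (k + 1)" using N(1) by (simp only: of_nat_le_iff)
    then have "2^N \<le> real (Suc k)" by simp
    then show ?thesis by (simp add: field_simps power_divide)
  qed
  ultimately show ?thesis by linarith
qed

end

theorem corollary3p7:
  fixes M :: "real measure" and r :: real
  assumes "is_cantor_measure M" and "1 \<le> r"
  shows "schatten M r (Kinf M) \<longleftrightarrow> r > 1"
proof -
  interpret CM M by unfold_locales (rule assms(1))
  define s where "s k = real_of_ereal (sing_val M (Kinf M) k)" for k
  have pos: "0 < s k" for k unfolding s_def by (rule rs_pos)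
  have up: "s k \<le> 4 / real (Suc k)" for k unfolding s_def by (rule rs_upper)
  have low: "1 / (2 * real (Suc k)) \<le> s k" for k unfolding s_def by (rule rs_lower)
  show ?thesis
  proof
    assume sch: "schatten M r (Kinf M)"
    show "r > 1"
    proof (rule ccontr)
      assume "\<not> r > 1"
      then have r1: "r = 1" using assms(2) by simp
      have "summable (\<lambda>k. s k powr r)" using sch unfolding schatten_def s_def by simp
      moreover have "(\<lambda>k. s k powr r) = s" using pos r1 by (intro ext) (simp add: order_less_imp_le)
      ultimately have "summable s" by simp
      then have "summable (\<lambda>k. 1 / (2 * real (Suc k)))"
        by (rule summable_comparison_test[rotated]) (use low in auto)
      then have "summable (\<lambda>k. 2 * (1 / (2 * real (Suc k))))" by (rule summable_mult)
      moreover have eq: "(\<lambda>k. 2 * (1 / (2 * real (Suc k)))) = (\<lambda>k. inverse (real (Suc k)))"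
        by (rule ext) (simp add: field_simps)
      ultimately have "summable (\<lambda>k. inverse (real (Suc k)))" by (simp only: eq)
      then have "summable (\<lambda>n. inverse (real n))" by (subst (asm) summable_Suc_iff)
      then show False using not_summable_harmonic by blast
    qed
  next
    assume r: "r > 1"
    have "summable (\<lambda>n. real n powr (-r))" using r by (subst summable_real_powr_iff) simp
    then have "summable (\<lambda>k. real (Suc k) powr (-r))" by (subst summable_Suc_iff)
    then have S: "summable (\<lambda>k. 4 powr r * real (Suc k) powr (-r))" by (rule summable_mult)
    have "summable (\<lambda>k. s k powr r)"
    proof (rule summable_comparison_test[OF _ S])
      show "\<exists>N. \<forall>n\<ge>N. norm (s n powr r) \<le> 4 powr r * real (Suc n) powr (-r)"
      proof (intro exI allI impI)
        fix n :: nat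
        have "norm (s n powr r) = s n powr r" by simp
        also have "\<dots> \<le> (4 / real (Suc n)) powr r"
          using pos[of n] up[of n] r by (intro powr_mono2) auto
        also have "\<dots> = 4 powr r * real (Suc n) powr (-r)"
          by (simp add: powr_divide powr_minus_divide)
        finally show "norm (s n powr r) \<le> 4 powr r * real (Suc n) powr (-r)" .
      qed
    qed
    then show "schatten M r (Kinf M)"
      unfolding schatten_def s_def using lin_op_K compact_K by simp
  qed
qed

end
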